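(* Let $P_0,P_1$ be a two-outcome verifier with associated operators $\rho=R_1,R_2,\dots,R_r$ (as in the context), and suppose $P_0,P_1,R_1,\dots,R_r$ are all diagonal with respect to the tensor product of fixed orthonormal bases of the spaces $\mathcal{X}_1,\dots,\mathcal{X}_r,\mathcal{Y}_1,\dots,\mathcal{Y}_r$. Then for every integer $n\ge1$ and every $k\in\{0,\dots,n\}$, \[ p'_{n,k}=\sum_{t=k}^{n}\binom{n}{t}p^t(1-p)^{n-t}. \]
   Context: Fix an integer $r\ge1$ and finite-dimensional complex Hilbert spaces $\mathcal{X}_1,\dots,\mathcal{X}_r$, $\mathcal{Y}_1,\dots,\mathcal{Y}_r$. Write $\mathcal{X}_{1\ldots j}=\mathcal{X}_1\otimes\cdots\otimes\mathcal{X}_j$, similarly $\mathcal{Y}_{1\ldots j}$; tensor products in different orders are identified via the obvious permutation of factors. $\mathrm{Pos}$ = positive semidefinite operators, $\mathrm{D}$ = density operators, $\langle A,B\rangle=\mathrm{Tr}(A^*B)$. A two-outcome verifier is a pair $P_0,P_1\in\mathrm{Pos}(\mathcal{Y}_{1\ldots r}\otimes\mathcal{X}_{1\ldots r})$ for which there exist $R_1=\rho\in\mathrm{D}(\mathcal{X}_1)$ and $R_j\in\mathrm{Pos}(\mathcal{Y}_{1\ldots j-1}\otimes\mathcal{X}_{1\ldots j})$, $2\le j\le r$, with $\mathrm{Tr}_{\mathcal{X}_{j+1}}(R_{j+1})=\mathbb{I}_{\mathcal{Y}_j}\otimes R_j$ for $1\le j\le r-1$ and $P_0+P_1=\mathbb{I}_{\mathcal{Y}_r}\otimes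 R_r$. For $n\ge1$, an $n$-fold strategy is $X\in\mathrm{Pos}((\mathcal{Y}_{1\ldots r}\otimes\mathcal{X}_{1\ldots r})^{\otimes n})$ such that there exist $X_j\in\mathrm{Pos}(\mathcal{Y}_{1\ldots j}^{\otimes n}\otimes\mathcal{X}_{1\ldots j}^{\otimes n})$, $1\le j\le r$, with $X_r=X$, $\mathrm{Tr}_{\mathcal{Y}_1^{\otimes n}}(X_1)=\mathbb{I}_{\mathcal{X}_1^{\otimes n}}$, $\mathrm{Tr}_{\mathcal{Y}_j^{\otimes n}}(X_j)=X_{j-1}\otimes\mathbb{I}_{\mathcal{X}_j^{\otimes n}}$ for $2\le j\le r$. Let $\Sigma^n_{\ge k}\subseteq\{0,1\}^n$ be the strings with at least $k$ ones. Define $p=\sup\{\langle P_1,X\rangle: X \text{ a 1-fold strategy}\}$ (optimal single-copy winning probability) and $p'_{n,k}=\sup\{\sum_{(i_1,\dots,i_n)\in\Sigma^n_{\ge k}}\langle P_{i_1}\otimes\cdots\otimes P_{i_n},X\rangle: X \text{ an } n\text{-fold strategy}\}$ (optimal probability of winning at least $k$ of $n$ parallel copies). *)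

theory Defs
  imports Complex_Main
begin

text \<open>Tensor factors are labelled: LX c j is the space X_j of copy c, LY c j the
space Y_j of copy c (rounds j = 1..r, copies c = 0..n-1; a single copy uses c = 0).
Each space is identified with C^d via its fixed orthonormal basis, so a basis state
of the tensor product of the factors in a label set S is a function a assigning to
each label l in S an index a l < dim l (and 0 outside S). An operator is a complex
matrix indexed by such basis states; only its entries on basis states matter.\<close>

datatype lab = LX nat nat | LY nat nat

fun ldim :: "(nat \<Rightarrow> nat) \<Rightarrow> (nat \<Rightarrow> nat) \<Rightarrow> lab \<Rightarrow> nat" where
  "ldim dX dY (LX c j) = dX j"
| "ldim dX dY (LY c j) = dY j"

type_synonym idx = "lab \<Rightarrow> nat"
type_synonym op = "idx \<Rightarrow> idx \<Rightarrow> complex"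

definition basis :: "(lab \<Rightarrow> nat) \<Rightarrow> lab set \<Rightarrow> idx set" where
  "basis d S = {a. \<forall>l. (l \<in> S \<longrightarrow> a l < d l) \<and> (l \<notin> S \<longrightarrow> a l = 0)}"

definition restr :: "idx \<Rightarrow> lab set \<Rightarrow> idx" where
  "restr a S = (\<lambda>l. if l \<in> S then a l else 0)"

definition merge :: "idx \<Rightarrow> idx \<Rightarrow> lab set \<Rightarrow> idx" where
  "merge a c T = (\<lambda>l. if l \<in> T then c l else a l)"

definition idop :: op where
  "idop a b = (if a = b then 1 else 0)"

definition tens :: "lab set \<Rightarrow> op \<Rightarrow> lab set \<Rightarrow> op \<Rightarrow> op" where
  "tens S A T B = (\<lambda>a b. A (restr a S) (restr b S) * B (restr a T) (restr b T))"

definition ptrace :: "(lab \<Rightarrow> nat) \<Rightarrow> lab set \<Rightarrow> op \<Rightarrow> op" where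
  "ptrace d T M = (\<lambda>a b. \<Sum>c\<in>basis d T. M (merge a c T) (merge b c T))"

definition op_eq :: "(lab \<Rightarrow> nat) \<Rightarrow> lab set \<Rightarrow> op \<Rightarrow> op \<Rightarrow> bool" where
  "op_eq d S A B \<longleftrightarrow> (\<forall>a\<in>basis d S. \<forall>b\<in>basis d S. A a b = B a b)"

definition psd :: "(lab \<Rightarrow> nat) \<Rightarrow> lab set \<Rightarrow> op \<Rightarrow> bool" where
  "psd d S M \<longleftrightarrow> (\<forall>v :: idx \<Rightarrow> complex.
     (let q = (\<Sum>a\<in>basis d S. \<Sum>b\<in>basis d S. cnj (v a) * M a b * v b)
      in Im q = 0 \<and> 0 \<le> Re q))"

definition density :: "(lab \<Rightarrow> nat) \<Rightarrow> lab set \<Rightarrow> op \<Rightarrow> bool" where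
  "density d S M \<longleftrightarrow> psd d S M \<and> (\<Sum>a\<in>basis d S. M a a) = 1"

definition diagonal :: "(lab \<Rightarrow> nat) \<Rightarrow> lab set \<Rightarrow> op \<Rightarrow> bool" where
  "diagonal d S M \<longleftrightarrow> (\<forall>a\<in>basis d S. \<forall>b\<in>basis d S. a \<noteq> b \<longrightarrow> M a b = 0)"

definition inner_op :: "(lab \<Rightarrow> nat) \<Rightarrow> lab set \<Rightarrow> op \<Rightarrow> op \<Rightarrow> complex" where
  "inner_op d S A B = (\<Sum>a\<in>basis d S. \<Sum>b\<in>basis d S. cnj (A a b) * B a b)"

definition VX :: "nat \<Rightarrow> nat \<Rightarrow> lab set" where
  "VX c j = {LX c i | i. 1 \<le> i \<and> i \<le> j}"
definition VY :: "nat \<Rightarrow> nat \<Rightarrow> lab set" where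
  "VY c j = {LY c i | i. 1 \<le> i \<and> i \<le> j}"

definition NX :: "nat \<Rightarrow> nat \<Rightarrow> lab set" where
  "NX n j = (\<Union>c<n. VX c j)"
definition NY :: "nat \<Rightarrow> nat \<Rightarrow> lab set" where
  "NY n j = (\<Union>c<n. VY c j)"
definition LXs :: "nat \<Rightarrow> nat \<Rightarrow> lab set" where
  "LXs n j = {LX c j | c. c < n}"
definition LYs :: "nat \<Rightarrow> nat \<Rightarrow> lab set" where
  "LYs n j = {LY c j | c. c < n}"

definition is_verifier ::
  "(nat \<Rightarrow> nat) \<Rightarrow> (nat \<Rightarrow> nat) \<Rightarrow> nat \<Rightarrow> op \<Rightarrow> op \<Rightarrow> (nat \<Rightarrow> op) \<Rightarrow> bool" where
  "is_verifier dX dY r P0 P1 R \<longleftrightarrow>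
    (let d = ldim dX dY; V = VY 0 r \<union> VX 0 r in
      psd d V P0 \<and> psd d V P1 \<and>
      density d (VX 0 1) (R 1) \<and>
      (\<forall>j\<in>{2..r}. psd d (VY 0 (j - 1) \<union> VX 0 j) (R j)) \<and>
      (\<forall>j\<in>{1..<r}. op_eq d (VY 0 j \<union> VX 0 j)
          (ptrace d {LX 0 (j + 1)} (R (j + 1)))
          (tens {LY 0 j} idop (VY 0 (j - 1) \<union> VX 0 j) (R j))) \<and>
      op_eq d V (\<lambda>a b. P0 a b + P1 a b)
          (tens {LY 0 r} idop (VY 0 (r - 1) \<union> VX 0 r) (R r)))"

definition is_strategy :: "(nat \<Rightarrow> nat) \<Rightarrow> (nat \<Rightarrow> nat) \<Rightarrow> nat \<Rightarrow> nat \<Rightarrow> op \<Rightarrow> bool" where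
  "is_strategy dX dY r n X \<longleftrightarrow>
    (let d = ldim dX dY in
     \<exists>Xs :: nat \<Rightarrow> op.
      (\<forall>j\<in>{1..r}. psd d (NY n j \<union> NX n j) (Xs j)) \<and>
      op_eq d (NY n r \<union> NX n r) (Xs r) X \<and>
      op_eq d (NX n 1) (ptrace d (LYs n 1) (Xs 1)) idop \<and>
      (\<forall>j\<in>{2..r}. op_eq d (NY n (j - 1) \<union> NX n j)
          (ptrace d (LYs n j) (Xs j))
          (tens (NY n (j - 1) \<union> NX n (j - 1)) (Xs (j - 1)) (LXs n j) idop)))"

fun mv :: "nat \<Rightarrow> lab \<Rightarrow> lab" where
  "mv c (LX i j) = LX c j"
| "mv c (LY i j) = LY c j"

definition copyop :: "nat \<Rightarrow> nat \<Rightarrow> op \<Rightarrow> op" where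
  "copyop r c P = (\<lambda>a b. P (restr (a \<circ> mv c) (VY 0 r \<union> VX 0 r))
                           (restr (b \<circ> mv c) (VY 0 r \<union> VX 0 r)))"

text \<open>P_{i_1} \<otimes> ... \<otimes> P_{i_n}; the string (i_1..i_n) is a bool list (True = 1).\<close>
definition prodop :: "nat \<Rightarrow> op \<Rightarrow> op \<Rightarrow> bool list \<Rightarrow> op" where
  "prodop r P0 P1 bs = (\<lambda>a b. \<Prod>c<length bs. copyop r c (if bs ! c then P1 else P0) a b)"

text \<open>Optimal single-copy winning probability p (the values are real; Re just
extracts them).\<close>
definition win_prob :: "(nat \<Rightarrow> nat) \<Rightarrow> (nat \<Rightarrow> nat) \<Rightarrow> nat \<Rightarrow> op \<Rightarrow> real" where
  "win_prob dX dY r P1 =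
     Sup {Re (inner_op (ldim dX dY) (VY 0 r \<union> VX 0 r) P1 X) | X. is_strategy dX dY r 1 X}"

definition win_atleast ::
  "(nat \<Rightarrow> nat) \<Rightarrow> (nat \<Rightarrow> nat) \<Rightarrow> nat \<Rightarrow> op \<Rightarrow> op \<Rightarrow> nat \<Rightarrow> nat \<Rightarrow> real" where
  "win_atleast dX dY r P0 P1 n k =
     Sup {Re (\<Sum>bs\<in>{bs. length bs = n \<and> k \<le> length (filter id bs)}.
                inner_op (ldim dX dY) (NY n r \<union> NX n r) (prodop r P0 P1 bs) X)
          | X. is_strategy dX dY r n X}"

end

theory Submission
  imports Defs
begin


lemma basis_iff: "a \<in> basis d S \<longleftrightarrow> (\<forall>l\<in>S. a l < d l) \<and> (\<forall>l. l \<notin> S \<longrightarrow> a l = 0)"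
  by (auto simp: basis_def)

lemma basis_empty: "basis d {} = {\<lambda>_. 0}"
  by (auto simp: basis_def)

lemma basis_insert_eq: assumes "l \<notin> S"
  shows "basis d (insert l S) = (\<lambda>(a,v). a(l:=v)) ` (basis d S \<times> {..<d l})"
proof
  show "(\<lambda>(a,v). a(l:=v)) ` (basis d S \<times> {..<d l}) \<subseteq> basis d (insert l S)"
    by (auto simp: basis_def)
  show "basis d (insert l S) \<subseteq> (\<lambda>(a,v). a(l:=v)) ` (basis d S \<times> {..<d l})"
  proof
    fix c assume c: "c \<in> basis d (insert l S)"
    hence "c(l:=0) \<in> basis d S" "c l < d l" using assms by (auto simp: basis_def)
    moreover have "c = (c(l:=0))(l := c l)" by simp
    ultimately show "c \<in> (\<lambda>(a,v). a(l:=v)) ` (basis d S \<times> {..<d l})"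
      by (intro image_eqI[where x="(c(l:=0), c l)"]) auto
  qed
qed

lemma basis_insert_inj: assumes "l \<notin> S"
  shows "inj_on (\<lambda>(a,v). a(l:=v)) (basis d S \<times> {..<d l})"
proof (rule inj_onI, clarify)
  fix a v a' v' assume "a \<in> basis d S" "a' \<in> basis d S" and e: "a(l:=v) = a'(l:=v')"
  hence "a l = 0" "a' l = 0" using assms by (auto simp: basis_def)
  from e have "v = v'" by (metis fun_upd_same)
  moreover from e have "\<forall>x. x \<noteq> l \<longrightarrow> a x = a' x" by (metis fun_upd_other)
  ultimately show "a = a' \<and> v = v'" using \<open>a l = 0\<close> \<open>a' l = 0\<close> by (metis ext)
qed

lemma sum_basis_insert: assumes "l \<notin> S"
  shows "(\<Sum>c\<in>basis d (insert l S). f c) = (\<Sum>a\<in>basis d S. \<Sum>v<d l. f (a(l:=v)))"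
proof -
  have "(\<Sum>c\<in>basis d (insert l S). f c) = (\<Sum>(a,v)\<in>basis d S \<times> {..<d l}. f (a(l:=v)))"
    unfolding basis_insert_eq[OF assms] by (subst sum.reindex[OF basis_insert_inj[OF assms]]) (simp add: case_prod_unfold comp_def)
  also have "\<dots> = (\<Sum>a\<in>basis d S. \<Sum>v<d l. f (a(l:=v)))" by (simp add: sum.cartesian_product)
  finally show ?thesis .
qed

lemma finite_basis: "finite S \<Longrightarrow> finite (basis d S)"
proof (induction S rule: finite_induct)
  case empty then show ?case by (simp add: basis_empty)
next
  case (insert l S) then show ?case by (simp add: basis_insert_eq)
qed

lemma merge_apply: "merge a b T l = (if l \<in> T then b l else a l)" by (simp add: merge_def)
lemma restr_apply: "restr a S l = (if l \<in> S then a l else 0)" by (simp add: restr_def)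

lemma basis_union_eq: assumes "A \<inter> B = {}"
  shows "basis d (A \<union> B) = (\<lambda>(a,b). merge a b B) ` (basis d A \<times> basis d B)"
proof
  show "(\<lambda>(a,b). merge a b B) ` (basis d A \<times> basis d B) \<subseteq> basis d (A \<union> B)"
    using assms by (auto simp: basis_def merge_def)
  show "basis d (A \<union> B) \<subseteq> (\<lambda>(a,b). merge a b B) ` (basis d A \<times> basis d B)"
  proof
    fix c assume c: "c \<in> basis d (A \<union> B)"
    hence "restr c A \<in> basis d A" "restr c B \<in> basis d B" by (auto simp: basis_def restr_def)
    moreover have "c = merge (restr c A) (restr c B) B" using c by (auto simp: basis_def restr_def merge_def)
    ultimately show "c \<in> (\<lambda>(a,b). merge a b B) ` (basis d A \<times> basis d B)" by force
  qed
qed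

lemma basis_union_inj: assumes "A \<inter> B = {}"
  shows "inj_on (\<lambda>(a,b). merge a b B) (basis d A \<times> basis d B)"
proof (rule inj_onI, clarify)
  fix a b a' b' assume h: "a \<in> basis d A" "a' \<in> basis d A" "b \<in> basis d B" "b' \<in> basis d B"
    and e: "merge a b B = merge a' b' B"
  have "a x = a' x \<and> b x = b' x" for x
  proof -
    have "merge a b B x = merge a' b' B x" using e by simp
    thus ?thesis using h assms unfolding basis_def merge_def
      by (cases "x \<in> B"; cases "x \<in> A") auto
  qed
  thus "a = a' \<and> b = b'" by auto
qed

lemma sum_basis_union: assumes "A \<inter> B = {}"
  shows "(\<Sum>c\<in>basis d (A \<union> B). f c) = (\<Sum>a\<in>basis d A. \<Sum>b\<in>basis d B. f (merge a b B))"
proof -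
  have "(\<Sum>c\<in>basis d (A \<union> B). f c) = (\<Sum>(a,b)\<in>basis d A \<times> basis d B. f (merge a b B))"
    unfolding basis_union_eq[OF assms] by (subst sum.reindex[OF basis_union_inj[OF assms]]) (simp add: case_prod_unfold comp_def)
  also have "\<dots> = (\<Sum>a\<in>basis d A. \<Sum>b\<in>basis d B. f (merge a b B))" by (simp add: sum.cartesian_product)
  finally show ?thesis .
qed

lemma sum_basis_single: "(\<Sum>c\<in>basis d {l}. f (merge a c {l})) = (\<Sum>v<d l. f (a(l:=v)))"
proof -
  have "(\<Sum>c\<in>basis d {l}. f (merge a c {l})) = (\<Sum>b\<in>basis d {}. \<Sum>v<d l. f (merge a (b(l:=v)) {l}))"
    by (subst sum_basis_insert) auto
  also have "\<dots> = (\<Sum>v<d l. f (a(l:=v)))"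
    unfolding basis_empty by (simp, intro sum.cong refl arg_cong[where f=f]) (auto simp: merge_def fun_eq_iff)
  finally show ?thesis .
qed

lemma merge_restr: "a \<in> basis d S \<Longrightarrow> S \<inter> T = {} \<Longrightarrow> restr (merge a b T) S = a"
  by (auto simp: basis_def merge_def restr_def fun_eq_iff)

lemma restr_basis_self: "a \<in> basis d S \<Longrightarrow> restr a S = a"
  by (auto simp: basis_def restr_def fun_eq_iff)

lemma psd_diag: assumes "psd d S M" "finite S" "a \<in> basis d S"
  shows "Im (M a a) = 0 \<and> 0 \<le> Re (M a a)"
proof -
  define v :: "idx \<Rightarrow> complex" where "v = (\<lambda>b. if b = a then 1 else 0)"
  have fin: "finite (basis d S)" using finite_basis[OF assms(2)] .
  have "(\<Sum>x\<in>basis d S. \<Sum>y\<in>basis d S. cnj (v x) * M x y * v y) = (\<Sum>x\<in>basis d S. if x = a then M a a else 0)"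
  proof (rule sum.cong[OF refl])
    fix x assume x: "x \<in> basis d S"
    have "(\<Sum>y\<in>basis d S. cnj (v x) * M x y * v y) = (\<Sum>y\<in>basis d S. if y = a then cnj (v x) * M x a else 0)"
      by (intro sum.cong) (auto simp: v_def)
    also have "\<dots> = cnj (v x) * M x a" using fin assms(3) by simp
    finally show "(\<Sum>y\<in>basis d S. cnj (v x) * M x y * v y) = (if x = a then M a a else 0)" by (simp add: v_def)
  qed
  also have "\<dots> = M a a" using fin assms(3) by simp
  finally have e: "(\<Sum>x\<in>basis d S. \<Sum>y\<in>basis d S. cnj (v x) * M x y * v y) = M a a" .
  have "Im (\<Sum>x\<in>basis d S. \<Sum>y\<in>basis d S. cnj (v x) * M x y * v y) = 0 \<and> 0 \<le> Re (\<Sum>x\<in>basis d S. \<Sum>y\<in>basis d S. cnj (v x) * M x y * v y)"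
    using assms(1) unfolding psd_def Let_def by (rule allE[where x=v])
  thus ?thesis unfolding e .
qed

lemma psd_of_diag: assumes "finite S" "\<forall>a\<in>basis d S. \<forall>b\<in>basis d S. a \<noteq> b \<longrightarrow> M a b = 0"
  "\<forall>a\<in>basis d S. Im (M a a) = 0 \<and> 0 \<le> Re (M a a)"
  shows "psd d S M"
  unfolding psd_def Let_def
proof
  fix v :: "idx \<Rightarrow> complex"
  have fin: "finite (basis d S)" using finite_basis[OF assms(1)] .
  have "(\<Sum>x\<in>basis d S. \<Sum>y\<in>basis d S. cnj (v x) * M x y * v y)
      = (\<Sum>x\<in>basis d S. cnj (v x) * M x x * v x)"
  proof (rule sum.cong[OF refl])
    fix x assume x: "x \<in> basis d S"
    have "(\<Sum>y\<in>basis d S. cnj (v x) * M x y * v y) = (\<Sum>y\<in>basis d S. if y = x then cnj (v x) * M x x * v x else 0)"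
      using assms(2) x by (intro sum.cong) auto
    thus "(\<Sum>y\<in>basis d S. cnj (v x) * M x y * v y) = cnj (v x) * M x x * v x" using fin x by simp
  qed
  also have "\<dots> = (\<Sum>x\<in>basis d S. complex_of_real (Re (M x x) * ((Re (v x))^2 + (Im (v x))^2)))"
  proof (rule sum.cong[OF refl])
    fix x assume x: "x \<in> basis d S"
    have "M x x = complex_of_real (Re (M x x))" using assms(3) x by (simp add: complex_eq_iff)
    thus "cnj (v x) * M x x * v x = complex_of_real (Re (M x x) * ((Re (v x))^2 + (Im (v x))^2))"
      by (simp add: complex_eq_iff algebra_simps power2_eq_square)
  qed
  finally have e: "(\<Sum>x\<in>basis d S. \<Sum>y\<in>basis d S. cnj (v x) * M x y * v y) = complex_of_real (\<Sum>x\<in>basis d S. Re (M x x) * ((Re (v x))^2 + (Im (v x))^2))"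
    by simp
  have "0 \<le> (\<Sum>x\<in>basis d S. Re (M x x) * ((Re (v x))^2 + (Im (v x))^2))"
    using assms(3) by (intro sum_nonneg) simp
  thus "Im (\<Sum>x\<in>basis d S. \<Sum>y\<in>basis d S. cnj (v x) * M x y * v y) = 0 \<and>
         0 \<le> Re (\<Sum>x\<in>basis d S. \<Sum>y\<in>basis d S. cnj (v x) * M x y * v y)"
    unfolding e by simp
qed



primrec Gf :: "nat \<Rightarrow> nat \<Rightarrow> (nat \<Rightarrow> real) \<Rightarrow> (nat \<Rightarrow> real) \<Rightarrow> real" where
  "Gf 0 k u m = (if k = 0 then 1 else 0)"
| "Gf (Suc n) k u m = u n * Gf n (k - 1) u m + (m n - u n) * Gf n k u m"

lemma Gf_cong: "(\<forall>c<n. u c = u' c) \<Longrightarrow> (\<forall>c<n. m c = m' c) \<Longrightarrow> Gf n k u m = Gf n k u' m'"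
  by (induction n arbitrary: k) auto

lemma Gf_bounds: "(\<forall>c<n. 0 \<le> u c \<and> u c \<le> m c) \<Longrightarrow> 0 \<le> Gf n k u m \<and> Gf n (Suc k) u m \<le> Gf n k u m"
proof (induction n arbitrary: k)
  case 0 then show ?case by simp
next
  case (Suc n)
  have h: "0 \<le> u n" "u n \<le> m n" using Suc.prems by auto
  have IH: "\<And>k. 0 \<le> Gf n k u m \<and> Gf n (Suc k) u m \<le> Gf n k u m" using Suc by auto
  have m1: "Gf n k u m \<le> Gf n (k - 1) u m"
    using IH[of "k - 1"] by (cases k) auto
  have "0 \<le> Gf (Suc n) k u m" using IH h by simp
  moreover have "Gf (Suc n) (Suc k) u m \<le> Gf (Suc n) k u m"
  proof -
    have "u n * Gf n k u m \<le> u n * Gf n (k - 1) u m" using m1 h by (simp add: mult_left_mono)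
    moreover have "(m n - u n) * Gf n (Suc k) u m \<le> (m n - u n) * Gf n k u m"
      using IH[of k] h by (simp add: mult_left_mono)
    ultimately show ?thesis by simp
  qed
  ultimately show ?case by blast
qed

lemma Gf_mono: "(\<forall>c<n. 0 \<le> u c \<and> u c \<le> u' c \<and> u' c \<le> m c) \<Longrightarrow> Gf n k u m \<le> Gf n k u' m"
proof (induction n arbitrary: k)
  case 0 then show ?case by simp
next
  case (Suc n)
  have h: "0 \<le> u n" "u n \<le> u' n" "u' n \<le> m n" using Suc.prems by auto
  have IH: "\<And>k. Gf n k u m \<le> Gf n k u' m" using Suc by auto
  have "\<forall>c<n. 0 \<le> u' c \<and> u' c \<le> m c" using Suc.prems by (meson less_SucI order_trans)
  hence bu': "\<And>k. 0 \<le> Gf n k u' m \<and> Gf n (Suc k) u' m \<le> Gf n k u' m"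
    by (intro Gf_bounds) auto
  have m1: "Gf n k u' m \<le> Gf n (k - 1) u' m" using bu'[of "k - 1"] by (cases k) auto
  have "u n * Gf n (k - 1) u m + (m n - u n) * Gf n k u m \<le> u n * Gf n (k - 1) u' m + (m n - u n) * Gf n k u' m"
    using IH h by (intro add_mono mult_left_mono) auto
  also have "\<dots> \<le> u' n * Gf n (k - 1) u' m + (m n - u' n) * Gf n k u' m"
  proof -
    have "0 \<le> (u' n - u n) * (Gf n (k - 1) u' m - Gf n k u' m)" using h m1 by simp
    thus ?thesis by (simp add: algebra_simps)
  qed
  finally show ?case by simp
qed

abbreviation cnt :: "bool list \<Rightarrow> nat" where "cnt bs \<equiv> length (filter id bs)"

lemma bs_set_Suc: "{bs. length bs = Suc n \<and> k \<le> cnt bs} =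
   (\<lambda>bs. bs @ [True]) ` {bs. length bs = n \<and> k - 1 \<le> cnt bs} \<union> (\<lambda>bs. bs @ [False]) ` {bs. length bs = n \<and> k \<le> cnt bs}"
proof
  show "{bs. length bs = Suc n \<and> k \<le> cnt bs} \<subseteq> (\<lambda>bs. bs @ [True]) ` {bs. length bs = n \<and> k - 1 \<le> cnt bs} \<union> (\<lambda>bs. bs @ [False]) ` {bs. length bs = n \<and> k \<le> cnt bs}"
  proof
    fix bs assume "bs \<in> {bs. length bs = Suc n \<and> k \<le> cnt bs}"
    hence bs: "length bs = Suc n" "k \<le> cnt bs" by auto
    hence ne: "bs \<noteq> []" by auto
    have e: "bs = butlast bs @ [last bs]" using ne by simp
    show "bs \<in> (\<lambda>bs. bs @ [True]) ` {bs. length bs = n \<and> k - 1 \<le> cnt bs} \<union> (\<lambda>bs. bs @ [False]) ` {bs. length bs = n \<and> k \<le> cnt bs}"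
    proof (cases "last bs")
      case True
      have "cnt (butlast bs @ [last bs]) = Suc (cnt (butlast bs))" using True by simp
      hence "cnt bs = Suc (cnt (butlast bs))" using e by simp
      hence "butlast bs \<in> {bs. length bs = n \<and> k - 1 \<le> cnt bs}" using bs by auto
      hence "bs \<in> (\<lambda>bs. bs @ [True]) ` {bs. length bs = n \<and> k - 1 \<le> cnt bs}"
        using e True by (intro image_eqI[where x="butlast bs"]) auto
      thus ?thesis by blast
    next
      case False
      have "cnt (butlast bs @ [last bs]) = cnt (butlast bs)" using False by simp
      hence "cnt bs = cnt (butlast bs)" using e by simp
      hence "butlast bs \<in> {bs. length bs = n \<and> k \<le> cnt bs}" using bs by auto
      hence "bs \<in> (\<lambda>bs. bs @ [False]) ` {bs. length bs = n \<and> k \<le> cnt bs}"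
        using e False by (intro image_eqI[where x="butlast bs"]) auto
      thus ?thesis by blast
    qed
  qed
  show "(\<lambda>bs. bs @ [True]) ` {bs. length bs = n \<and> k - 1 \<le> cnt bs} \<union> (\<lambda>bs. bs @ [False]) ` {bs. length bs = n \<and> k \<le> cnt bs} \<subseteq> {bs. length bs = Suc n \<and> k \<le> cnt bs}"
    by auto
qed

lemma finite_bs: "finite {bs :: bool list. length bs = n \<and> P bs}"
proof -
  have "finite {bs :: bool list. set bs \<subseteq> UNIV \<and> length bs = n}" by (rule finite_lists_length_eq) simp
  thus ?thesis by (rule finite_subset[rotated]) auto
qed

lemma bs_sum: "(\<Sum>bs\<in>{bs. length bs = n \<and> k \<le> cnt bs}. \<Prod>c<n. (if bs ! c then u c else w c)) = Gf n k u (\<lambda>c. u c + w c)"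
proof (induction n arbitrary: k)
  case 0
  have "{bs :: bool list. length bs = 0 \<and> k \<le> cnt bs} = (if k = 0 then {[]} else {})" by auto
  then show ?case by simp
next
  case (Suc n)
  let ?A = "{bs. length bs = n \<and> k - 1 \<le> cnt bs}" and ?B = "{bs. length bs = n \<and> k \<le> cnt bs}"
  let ?f = "\<lambda>bs. \<Prod>c<Suc n. (if bs ! c then u c else w c)"
  have d: "(\<lambda>bs. bs @ [True]) ` ?A \<inter> (\<lambda>bs. bs @ [False]) ` ?B = {}" by auto
  have "sum ?f {bs. length bs = Suc n \<and> k \<le> cnt bs} = sum ?f ((\<lambda>bs. bs @ [True]) ` ?A) + sum ?f ((\<lambda>bs. bs @ [False]) ` ?B)"
    unfolding bs_set_Suc by (rule sum.union_disjoint) (auto intro: finite_bs simp: d)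
  also have "sum ?f ((\<lambda>bs. bs @ [True]) ` ?A) = (\<Sum>bs\<in>?A. u n * (\<Prod>c<n. (if bs ! c then u c else w c)))"
    by (subst sum.reindex) (auto simp: inj_on_def nth_append mult.commute intro!: sum.cong prod.cong)
  also have "sum ?f ((\<lambda>bs. bs @ [False]) ` ?B) = (\<Sum>bs\<in>?B. w n * (\<Prod>c<n. (if bs ! c then u c else w c)))"
    by (subst sum.reindex) (auto simp: inj_on_def nth_append mult.commute intro!: sum.cong prod.cong)
  finally have eq: "sum ?f {bs. length bs = Suc n \<and> k \<le> cnt bs} = (\<Sum>bs\<in>?A. u n * (\<Prod>c<n. (if bs ! c then u c else w c))) + (\<Sum>bs\<in>?B. w n * (\<Prod>c<n. (if bs ! c then u c else w c)))" .
  show ?case unfolding eq sum_distrib_left[symmetric] Suc.IH by simp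
qed

lemma binom_tail_0: "(\<Sum>t=0..n. real (n choose t) * p ^ t * (1 - p) ^ (n - t)) = 1"
proof -
  have "(p + (1 - p)) ^ n = (\<Sum>t\<le>n. real (n choose t) * p ^ t * (1 - p) ^ (n - t))"
    by (rule binomial_ring)
  thus ?thesis by (simp add: atMost_atLeast0)
qed

lemma Gf_binom: "Gf n k (\<lambda>_. p) (\<lambda>_. 1) = (\<Sum>t=k..n. real (n choose t) * p ^ t * (1 - p) ^ (n - t))"
proof (induction n arbitrary: k)
  case 0 then show ?case by simp
next
  case (Suc n)
  show ?case
  proof (cases k)
    case 0
    have g: "Gf n 0 (\<lambda>_. p) (\<lambda>_. 1) = 1" using Suc.IH[of 0] unfolding binom_tail_0 .
    show ?thesis unfolding 0 binom_tail_0 using g by simp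
  next
    case (Suc k')
    let ?E = "\<lambda>n t. real (n choose t) * p ^ t * (1 - p) ^ (n - t)"
    have "(\<Sum>t=Suc k'..Suc n. ?E (Suc n) t) = (\<Sum>s=k'..n. ?E (Suc n) (Suc s))"
      by (rule sum.shift_bounds_cl_Suc_ivl)
    also have "\<dots> = (\<Sum>s=k'..n. p * ?E n s) + (\<Sum>s=k'..n. real (n choose Suc s) * p ^ Suc s * (1 - p) ^ (n - s))"
      by (simp add: sum.distrib[symmetric] algebra_simps)
    also have "(\<Sum>s=k'..n. real (n choose Suc s) * p ^ Suc s * (1 - p) ^ (n - s)) = (\<Sum>t=Suc k'..Suc n. real (n choose t) * p ^ t * (1 - p) ^ (Suc n - t))"
      by (subst sum.shift_bounds_cl_Suc_ivl) simp
    also have "\<dots> = (\<Sum>t=Suc k'..n. real (n choose t) * p ^ t * (1 - p) ^ (Suc n - t))"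
      by (simp add: sum.cl_ivl_Suc)
    also have "\<dots> = (1 - p) * (\<Sum>t=Suc k'..n. ?E n t)"
      unfolding sum_distrib_left by (rule sum.cong[OF refl]) (auto simp add: Suc_diff_le mult_ac)
    finally have A: "(\<Sum>t=Suc k'..Suc n. ?E (Suc n) t) = (\<Sum>s=k'..n. p * ?E n s) + (1 - p) * (\<Sum>t=Suc k'..n. ?E n t)" .
    have B: "Gf (Suc n) k (\<lambda>_. p) (\<lambda>_. 1) = p * (\<Sum>s=k'..n. ?E n s) + (1 - p) * (\<Sum>t=Suc k'..n. ?E n t)"
      using Suc.IH[of k'] Suc.IH[of "Suc k'"] Suc by simp
    show ?thesis using A B Suc by (simp add: sum_distrib_left)
  qed
qed



lemma mem_VX[simp]: "LX c' i \<in> VX c j \<longleftrightarrow> c' = c \<and> 1 \<le> i \<and> i \<le> j" "LY c' i \<notin> VX c j"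
  by (auto simp: VX_def)
lemma mem_VY[simp]: "LY c' i \<in> VY c j \<longleftrightarrow> c' = c \<and> 1 \<le> i \<and> i \<le> j" "LX c' i \<notin> VY c j"
  by (auto simp: VY_def)
lemma mem_NX[simp]: "LX c i \<in> NX n j \<longleftrightarrow> c < n \<and> 1 \<le> i \<and> i \<le> j" "LY c i \<notin> NX n j"
  by (auto simp: NX_def)
lemma mem_NY[simp]: "LY c i \<in> NY n j \<longleftrightarrow> c < n \<and> 1 \<le> i \<and> i \<le> j" "LX c i \<notin> NY n j"
  by (auto simp: NY_def)
lemma mem_LXs[simp]: "LX c i \<in> LXs n j \<longleftrightarrow> c < n \<and> i = j" "LY c i \<notin> LXs n j"
  by (auto simp: LXs_def)
lemma mem_LYs[simp]: "LY c i \<in> LYs n j \<longleftrightarrow> c < n \<and> i = j" "LX c i \<notin> LYs n j"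
  by (auto simp: LYs_def)

lemma finite_VX[simp]: "finite (VX c j)"
proof - have "VX c j = (\<lambda>i. LX c i) ` {1..j}" by (auto simp: VX_def) thus ?thesis by simp qed
lemma finite_VY[simp]: "finite (VY c j)"
proof - have "VY c j = (\<lambda>i. LY c i) ` {1..j}" by (auto simp: VY_def) thus ?thesis by simp qed
lemma finite_NX[simp]: "finite (NX n j)" by (simp add: NX_def)
lemma finite_NY[simp]: "finite (NY n j)" by (simp add: NY_def)
lemma finite_LXs[simp]: "finite (LXs n j)"
proof - have "LXs n j = (\<lambda>c. LX c j) ` {..<n}" by (auto simp: LXs_def) thus ?thesis by simp qed
lemma finite_LYs[simp]: "finite (LYs n j)"
proof - have "LYs n j = (\<lambda>c. LY c j) ` {..<n}" by (auto simp: LYs_def) thus ?thesis by simp qed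

lemma set_eq_lab: "(\<And>c i. LX c i \<in> A \<longleftrightarrow> LX c i \<in> B) \<Longrightarrow> (\<And>c i. LY c i \<in> A \<longleftrightarrow> LY c i \<in> B) \<Longrightarrow> A = B"
  by (rule set_eqI, case_tac x) auto

lemma NX_Suc: "NX n (Suc j) = NX n j \<union> LXs n (Suc j)" by (rule set_eq_lab) auto
lemma NY_Suc: "NY n (Suc j) = NY n j \<union> LYs n (Suc j)" by (rule set_eq_lab) auto
lemma NX_0[simp]: "NX n 0 = {}" by (rule set_eq_lab) auto
lemma NY_0[simp]: "NY n 0 = {}" by (rule set_eq_lab) auto
lemma VX_0[simp]: "VX c 0 = {}" by (rule set_eq_lab) auto
lemma VY_0[simp]: "VY c 0 = {}" by (rule set_eq_lab) auto
lemma NX_1: "NX n 1 = LXs n 1" by (rule set_eq_lab) auto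
lemma VX_1: "VX 0 1 = {LX 0 1}" by (rule set_eq_lab) auto
lemma N1_V: "NY 1 j \<union> NX 1 j = VY 0 j \<union> VX 0 j" by (rule set_eq_lab) auto

lemma fun_eq_lab: "(\<And>c i. f (LX c i) = g (LX c i)) \<Longrightarrow> (\<And>c i. f (LY c i) = g (LY c i)) \<Longrightarrow> f = g"
  by (rule ext, case_tac x) auto

definition loc :: "nat \<Rightarrow> nat \<Rightarrow> idx \<Rightarrow> idx" where
  "loc r c a = restr (a \<circ> mv c) (VY 0 r \<union> VX 0 r)"

lemma loc_LX[simp]: "loc r c a (LX c' i) = (if c' = 0 \<and> 1 \<le> i \<and> i \<le> r then a (LX c i) else 0)"
  by (simp add: loc_def restr_def)
lemma loc_LY[simp]: "loc r c a (LY c' i) = (if c' = 0 \<and> 1 \<le> i \<and> i \<le> r then a (LY c i) else 0)"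
  by (simp add: loc_def restr_def)

lemma loc_basis: assumes "a \<in> basis (ldim dX dY) (NY n jy \<union> NX n jx)" "c < n" "jy \<le> r" "jx \<le> r"
  shows "loc r c a \<in> basis (ldim dX dY) (VY 0 jy \<union> VX 0 jx)"
  unfolding basis_iff
proof (intro conjI allI ballI impI)
  fix l assume "l \<in> VY 0 jy \<union> VX 0 jx"
  have B: "\<And>l. l \<in> NY n jy \<union> NX n jx \<Longrightarrow> a l < ldim dX dY l" using assms(1) unfolding basis_iff by blast
  show "loc r c a l < ldim dX dY l"
  proof (cases l)
    case (LX c' i)
    hence "c' = 0" "1 \<le> i" "i \<le> jx" using \<open>l \<in> _\<close> by auto
    hence "LX c i \<in> NY n jy \<union> NX n jx" using assms by auto
    from B[OF this] show ?thesis using LX \<open>c' = 0\<close> \<open>1 \<le> i\<close> \<open>i \<le> jx\<close> assms by auto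
  next
    case (LY c' i)
    hence "c' = 0" "1 \<le> i" "i \<le> jy" using \<open>l \<in> _\<close> by auto
    hence "LY c i \<in> NY n jy \<union> NX n jx" using assms by auto
    from B[OF this] show ?thesis using LY \<open>c' = 0\<close> \<open>1 \<le> i\<close> \<open>i \<le> jy\<close> assms by auto
  qed
next
  fix l assume "l \<notin> VY 0 jy \<union> VX 0 jx"
  thus "loc r c a l = 0" using assms unfolding basis_iff by (cases l) auto
qed

lemma loc_merge_LX: assumes "1 \<le> j" "j \<le> r" "c < n"
  shows "loc r c (merge a z (LXs n j)) = (loc r c a)(LX 0 j := z (LX c j))"
  using assms by (intro fun_eq_lab) (auto simp: merge_def)
lemma loc_merge_LY: assumes "1 \<le> j" "j \<le> r" "c < n"
  shows "loc r c (merge a z (LYs n j)) = (loc r c a)(LY 0 j := z (LY c j))"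
  using assms by (intro fun_eq_lab) (auto simp: merge_def)
lemma loc_zero[simp]: "loc r c (\<lambda>_. 0) = (\<lambda>_. 0)"
  by (intro fun_eq_lab) auto

lemma loc_0_self: "a \<in> basis d (VY 0 r \<union> VX 0 r) \<Longrightarrow> loc r 0 a = a"
  unfolding basis_iff by (intro fun_eq_lab) auto

lemma layer_sum:
  "(\<Sum>z\<in>basis (ldim dX dY) (LXs n j). Gf n k (\<lambda>c. f c (z (LX c j))) (\<lambda>c. g c (z (LX c j))))
   = Gf n k (\<lambda>c. \<Sum>v<dX j. f c v) (\<lambda>c. \<Sum>v<dX j. g c v)"
proof (induction n arbitrary: k)
  case 0
  have "LXs 0 j = {}" by (rule set_eq_lab) auto
  then show ?case by (simp add: basis_empty)
next
  case (Suc n)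
  have e: "LXs (Suc n) j = insert (LX n j) (LXs n j)" by (rule set_eq_lab) auto
  have ni: "LX n j \<notin> LXs n j" by simp
  let ?u = "\<lambda>z c. f c (z (LX c j))" and ?m = "\<lambda>z c. g c (z (LX c j))"
  have "(\<Sum>z\<in>basis (ldim dX dY) (LXs (Suc n) j). Gf (Suc n) k (?u z) (?m z))
      = (\<Sum>z\<in>basis (ldim dX dY) (LXs n j). \<Sum>v<dX j. Gf (Suc n) k (?u (z(LX n j := v))) (?m (z(LX n j := v))))"
    unfolding e by (subst sum_basis_insert[OF ni]) simp
  also have "\<dots> = (\<Sum>z\<in>basis (ldim dX dY) (LXs n j). \<Sum>v<dX j.
        f n v * Gf n (k - 1) (?u z) (?m z) + (g n v - f n v) * Gf n k (?u z) (?m z))"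
  proof (intro sum.cong refl)
    fix z v
    have "Gf n (k - 1) (?u (z(LX n j := v))) (?m (z(LX n j := v))) = Gf n (k - 1) (?u z) (?m z)"
      "Gf n k (?u (z(LX n j := v))) (?m (z(LX n j := v))) = Gf n k (?u z) (?m z)"
      by (intro Gf_cong; simp)+
    thus "Gf (Suc n) k (?u (z(LX n j := v))) (?m (z(LX n j := v))) =
        f n v * Gf n (k - 1) (?u z) (?m z) + (g n v - f n v) * Gf n k (?u z) (?m z)" by simp
  qed
  also have "\<dots> = (\<Sum>z\<in>basis (ldim dX dY) (LXs n j).
        (\<Sum>v<dX j. f n v) * Gf n (k - 1) (?u z) (?m z) + ((\<Sum>v<dX j. g n v) - (\<Sum>v<dX j. f n v)) * Gf n k (?u z) (?m z))"
    by (intro sum.cong refl) (simp add: sum.distrib sum_distrib_right sum_subtractf left_diff_distrib)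
  also have "\<dots> = (\<Sum>v<dX j. f n v) * Gf n (k - 1) (\<lambda>c. \<Sum>v<dX j. f c v) (\<lambda>c. \<Sum>v<dX j. g c v)
       + ((\<Sum>v<dX j. g n v) - (\<Sum>v<dX j. f n v)) * Gf n k (\<lambda>c. \<Sum>v<dX j. f c v) (\<lambda>c. \<Sum>v<dX j. g c v)"
    by (simp add: sum.distrib sum_distrib_left[symmetric] Suc.IH)
  finally show ?case by simp
qed



primrec UAm :: "(nat \<Rightarrow> nat) \<Rightarrow> (nat \<Rightarrow> nat) \<Rightarrow> nat \<Rightarrow> op \<Rightarrow> nat \<Rightarrow> idx \<Rightarrow> real" where
  "UAm dX dY r P1 0 h = Re (P1 h h)"
| "UAm dX dY r P1 (Suc m) h = (\<Sum>x<dX (r - m). Max ((\<lambda>y. UAm dX dY r P1 m ((h(LX 0 (r - m) := x))(LY 0 (r - m) := y))) ` {..<dY (r - m)}))"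

locale game =
  fixes dX dY :: "nat \<Rightarrow> nat" and r :: nat and P0 P1 :: op and R :: "nat \<Rightarrow> op"
  assumes r1: "1 \<le> r"
    and dpos: "\<forall>j\<in>{1..r}. 0 < dX j \<and> 0 < dY j"
    and ver: "is_verifier dX dY r P0 P1 R"
    and dP0: "diagonal (ldim dX dY) (VY 0 r \<union> VX 0 r) P0"
    and dP1: "diagonal (ldim dX dY) (VY 0 r \<union> VX 0 r) P1"
    and dR: "\<forall>j\<in>{1..r}. diagonal (ldim dX dY) (VY 0 (j - 1) \<union> VX 0 j) (R j)"
begin

abbreviation "dd \<equiv> ldim dX dY"
abbreviation "V0 \<equiv> VY 0 r \<union> VX 0 r"
abbreviation "DA0 j \<equiv> VY 0 j \<union> VX 0 j"
abbreviation "DQ0 j \<equiv> VY 0 (j - 1) \<union> VX 0 j"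

lemma dX_pos: "1 \<le> j \<Longrightarrow> j \<le> r \<Longrightarrow> 0 < dX j" using dpos by auto
lemma dY_pos: "1 \<le> j \<Longrightarrow> j \<le> r \<Longrightarrow> 0 < dY j" using dpos by auto

lemma ver_unf:
  "psd dd V0 P0" "psd dd V0 P1" "density dd (VX 0 1) (R 1)"
  "\<forall>j\<in>{2..r}. psd dd (VY 0 (j - 1) \<union> VX 0 j) (R j)"
  "\<forall>j\<in>{1..<r}. op_eq dd (VY 0 j \<union> VX 0 j) (ptrace dd {LX 0 (j + 1)} (R (j + 1)))
          (tens {LY 0 j} idop (VY 0 (j - 1) \<union> VX 0 j) (R j))"
  "op_eq dd V0 (\<lambda>a b. P0 a b + P1 a b) (tens {LY 0 r} idop (VY 0 (r - 1) \<union> VX 0 r) (R r))"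
  using ver unfolding is_verifier_def Let_def by auto

lemma R_psd: assumes "1 \<le> j" "j \<le> r" "h \<in> basis dd (DQ0 j)"
  shows "Im (R j h h) = 0 \<and> 0 \<le> Re (R j h h)"
proof (cases "j = 1")
  case True
  thus ?thesis using ver_unf(3) assms(3) psd_diag[of dd "VX 0 1" "R 1" h] unfolding density_def by simp
next
  case False
  thus ?thesis using ver_unf(4) assms psd_diag[of dd "DQ0 j" "R j" h] by auto
qed

lemma P_psd: assumes "h \<in> basis dd V0"
  shows "Im (P0 h h) = 0 \<and> 0 \<le> Re (P0 h h)" "Im (P1 h h) = 0 \<and> 0 \<le> Re (P1 h h)"
  using ver_unf(1,2) assms psd_diag by auto

lemma restr_upd_in: "h \<in> basis d S \<Longrightarrow> l \<in> S' \<Longrightarrow> S \<subseteq> S' \<Longrightarrow> restr (h(l := v)) S' = h(l := v)"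
  unfolding basis_iff by (auto simp: restr_def fun_eq_iff)

lemma R_step: assumes "1 \<le> j" "j < r" "h \<in> basis dd (DA0 j)"
  shows "(\<Sum>x<dX (Suc j). R (Suc j) (h(LX 0 (Suc j) := x)) (h(LX 0 (Suc j) := x)))
         = R j (restr h (DQ0 j)) (restr h (DQ0 j))"
proof -
  have "op_eq dd (DA0 j) (ptrace dd {LX 0 (j + 1)} (R (j + 1))) (tens {LY 0 j} idop (DQ0 j) (R j))"
    using ver_unf(5) assms by auto
  hence "ptrace dd {LX 0 (j + 1)} (R (j + 1)) h h = tens {LY 0 j} idop (DQ0 j) (R j) h h"
    using assms(3) unfolding op_eq_def by blast
  moreover have "ptrace dd {LX 0 (j + 1)} (R (j + 1)) h h = (\<Sum>x<dX (Suc j). R (Suc j) (h(LX 0 (Suc j) := x)) (h(LX 0 (Suc j) := x)))"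
    unfolding ptrace_def using sum_basis_single[where f="\<lambda>g. R (Suc j) g g" and d=dd and l="LX 0 (Suc j)" and a=h] by simp
  ultimately show ?thesis by (simp add: tens_def idop_def)
qed

lemma P_sum: assumes "h \<in> basis dd V0"
  shows "P0 h h + P1 h h = R r (restr h (DQ0 r)) (restr h (DQ0 r))"
  using ver_unf(6) assms unfolding op_eq_def by (simp add: tens_def idop_def)

lemma R_1: "(\<Sum>x<dX 1. R 1 ((\<lambda>_. 0)(LX 0 1 := x)) ((\<lambda>_. 0)(LX 0 1 := x))) = 1"
proof -
  have "(\<Sum>a\<in>basis dd (VX 0 1). R 1 a a) = 1" using ver_unf(3) unfolding density_def by blast
  also have "(\<Sum>a\<in>basis dd (VX 0 1). R 1 a a) = (\<Sum>a\<in>basis dd {LX 0 1}. R 1 (merge (\<lambda>_. 0) a {LX 0 1}) (merge (\<lambda>_. 0) a {LX 0 1}))"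
    unfolding VX_1
  proof (intro sum.cong refl)
    fix a assume "a \<in> basis dd {LX 0 1}"
    hence "merge (\<lambda>_. 0) a {LX 0 1} = a" unfolding basis_iff by (auto simp: merge_def fun_eq_iff)
    thus "R 1 a a = R 1 (merge (\<lambda>_. 0) a {LX 0 1}) (merge (\<lambda>_. 0) a {LX 0 1})" by simp
  qed
  also have "\<dots> = (\<Sum>x<dX 1. R 1 ((\<lambda>_. 0)(LX 0 1 := x)) ((\<lambda>_. 0)(LX 0 1 := x)))"
    using sum_basis_single[where f="\<lambda>g. R 1 g g" and d=dd and l="LX 0 1" and a="\<lambda>_. 0"] by simp
  finally show ?thesis .
qed

definition MQ :: "nat \<Rightarrow> idx \<Rightarrow> real" where
  "MQ j h = Re (R j (restr h (DQ0 j)) (restr h (DQ0 j)))"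

definition UA :: "nat \<Rightarrow> idx \<Rightarrow> real" where
  "UA j h = UAm dX dY r P1 (r - j) h"

definition UQ :: "nat \<Rightarrow> idx \<Rightarrow> real" where
  "UQ j h = Max ((\<lambda>y. UA j (h(LY 0 j := y))) ` {..<dY j})"

lemma UA_r: "UA r h = Re (P1 h h)" by (simp add: UA_def)

lemma UA_step: "j < r \<Longrightarrow> UA j h = (\<Sum>x<dX (Suc j). UQ (Suc j) (h(LX 0 (Suc j) := x)))"
proof -
  assume "j < r"
  hence e: "r - j = Suc (r - Suc j)" "r - (r - Suc j) = Suc j" by auto
  show ?thesis unfolding UA_def UQ_def e(1) by (simp add: e(2))
qed

lemma MQ_updY: "MQ j (h(LY 0 j := v)) = MQ j h"
proof -
  have "restr (h(LY 0 j := v)) (DQ0 j) = restr h (DQ0 j)"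
    by (rule fun_eq_lab; cases "j = 0"; auto simp: restr_def)
  thus ?thesis unfolding MQ_def by simp
qed

lemma basis_upd: "h \<in> basis d S \<Longrightarrow> v < d l \<Longrightarrow> h(l := v) \<in> basis d (insert l S)"
  unfolding basis_iff by auto

lemma DA0_eq: "DA0 j = insert (LY 0 j) (DQ0 j)" if "1 \<le> j"
  using that by (rule_tac set_eq_lab) auto
lemma DQ0_eq: "DQ0 (Suc j) = insert (LX 0 (Suc j)) (DA0 j)"
  by (rule set_eq_lab) auto

lemma MQ_step: assumes "1 \<le> j" "j < r" "h \<in> basis dd (DA0 j)"
  shows "(\<Sum>x<dX (Suc j). MQ (Suc j) (h(LX 0 (Suc j) := x))) = MQ j h"
proof -
  have "\<And>x. restr (h(LX 0 (Suc j) := x)) (DQ0 (Suc j)) = h(LX 0 (Suc j) := x)"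
    using assms(3) by (rule restr_upd_in) (auto simp: VX_def VY_def)
  hence "(\<Sum>x<dX (Suc j). MQ (Suc j) (h(LX 0 (Suc j) := x))) = Re (\<Sum>x<dX (Suc j). R (Suc j) (h(LX 0 (Suc j) := x)) (h(LX 0 (Suc j) := x)))"
    unfolding MQ_def by simp
  also have "\<dots> = MQ j h" unfolding R_step[OF assms] MQ_def ..
  finally show ?thesis .
qed

lemma UA_bounds_aux: "\<forall>j h. r - j = m \<longrightarrow> 1 \<le> j \<longrightarrow> j \<le> r \<longrightarrow> h \<in> basis dd (DA0 j) \<longrightarrow> 0 \<le> UA j h \<and> UA j h \<le> MQ j h"
proof (induction m)
  case 0
  show ?case
  proof (intro allI impI)
    fix j h assume a: "r - j = 0" "1 \<le> j" "j \<le> r" "h \<in> basis dd (DA0 j)"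
    hence j: "j = r" by simp
    hence h: "h \<in> basis dd V0" using a by simp
    have "MQ j h = Re (P0 h h) + Re (P1 h h)" unfolding MQ_def j P_sum[OF h, symmetric] by simp
    thus "0 \<le> UA j h \<and> UA j h \<le> MQ j h" using P_psd[OF h] j UA_r by simp
  qed
next
  case (Suc m)
  show ?case
  proof (intro allI impI)
    fix j h assume a: "r - j = Suc m" "1 \<le> j" "j \<le> r" "h \<in> basis dd (DA0 j)"
    hence jr: "j < r" by simp
    have b: "0 \<le> UQ (Suc j) (h(LX 0 (Suc j) := x)) \<and> UQ (Suc j) (h(LX 0 (Suc j) := x)) \<le> MQ (Suc j) (h(LX 0 (Suc j) := x))"
      if x: "x < dX (Suc j)" for x
    proof -
      let ?g = "h(LX 0 (Suc j) := x)"
      have g: "?g \<in> basis dd (DQ0 (Suc j))" unfolding DQ0_eq using a(4) x by (intro basis_upd) auto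
      have ne: "{..<dY (Suc j)} \<noteq> {}" using dY_pos[of "Suc j"] jr by auto
      have each: "0 \<le> UA (Suc j) (?g(LY 0 (Suc j) := y)) \<and> UA (Suc j) (?g(LY 0 (Suc j) := y)) \<le> MQ (Suc j) ?g"
        if y: "y < dY (Suc j)" for y
      proof -
        have "?g(LY 0 (Suc j) := y) \<in> basis dd (DA0 (Suc j))"
          unfolding DA0_eq[of "Suc j", simplified] using g y by (intro basis_upd) auto
        hence "0 \<le> UA (Suc j) (?g(LY 0 (Suc j) := y)) \<and> UA (Suc j) (?g(LY 0 (Suc j) := y)) \<le> MQ (Suc j) (?g(LY 0 (Suc j) := y))"
          using Suc.IH a jr by auto
        thus ?thesis by (simp add: MQ_updY)
      qed
      obtain y0 where y0: "y0 < dY (Suc j)" using ne by auto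
      have "UA (Suc j) (?g(LY 0 (Suc j) := y0)) \<le> UQ (Suc j) ?g" unfolding UQ_def
        using y0 by (intro Max_ge) auto
      moreover have "UQ (Suc j) ?g \<le> MQ (Suc j) ?g" unfolding UQ_def
        using ne each by (subst Max_le_iff) auto
      ultimately show ?thesis using each[OF y0] by linarith
    qed
    have "UA j h = (\<Sum>x<dX (Suc j). UQ (Suc j) (h(LX 0 (Suc j) := x)))" using UA_step[OF jr] .
    moreover have "0 \<le> (\<Sum>x<dX (Suc j). UQ (Suc j) (h(LX 0 (Suc j) := x)))" using b by (intro sum_nonneg) auto
    moreover have "(\<Sum>x<dX (Suc j). UQ (Suc j) (h(LX 0 (Suc j) := x))) \<le> (\<Sum>x<dX (Suc j). MQ (Suc j) (h(LX 0 (Suc j) := x)))"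
      using b by (intro sum_mono) auto
    ultimately show "0 \<le> UA j h \<and> UA j h \<le> MQ j h" using MQ_step[OF a(2) jr a(4)] by simp
  qed
qed

lemma UA_bounds: "1 \<le> j \<Longrightarrow> j \<le> r \<Longrightarrow> h \<in> basis dd (DA0 j) \<Longrightarrow> 0 \<le> UA j h \<and> UA j h \<le> MQ j h"
  using UA_bounds_aux by blast

lemma UQ_props: assumes "1 \<le> j" "j \<le> r" "h \<in> basis dd (DQ0 j)"
  shows "0 \<le> UQ j h" "UQ j h \<le> MQ j h" "\<And>y. y < dY j \<Longrightarrow> UA j (h(LY 0 j := y)) \<le> UQ j h"
    "\<exists>y<dY j. UA j (h(LY 0 j := y)) = UQ j h"
proof -
  have ne: "{..<dY j} \<noteq> {}" using dY_pos assms by auto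
  have each: "0 \<le> UA j (h(LY 0 j := y)) \<and> UA j (h(LY 0 j := y)) \<le> MQ j h" if y: "y < dY j" for y
  proof -
    have "h(LY 0 j := y) \<in> basis dd (DA0 j)" unfolding DA0_eq[OF assms(1)] using assms y by (intro basis_upd) auto
    thus ?thesis using UA_bounds[OF assms(1,2)] MQ_updY by metis
  qed
  show ge: "\<And>y. y < dY j \<Longrightarrow> UA j (h(LY 0 j := y)) \<le> UQ j h" unfolding UQ_def by (intro Max_ge) auto
  obtain y0 where y0: "y0 < dY j" using ne by auto
  show "0 \<le> UQ j h" using each[OF y0] ge[OF y0] by linarith
  show "UQ j h \<le> MQ j h" unfolding UQ_def using ne each by (subst Max_le_iff) auto
  have "UQ j h \<in> (\<lambda>y. UA j (h(LY 0 j := y))) ` {..<dY j}" unfolding UQ_def using ne by (intro Max_in) auto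
  thus "\<exists>y<dY j. UA j (h(LY 0 j := y)) = UQ j h" by auto
qed

definition ch :: "nat \<Rightarrow> idx \<Rightarrow> nat" where
  "ch j h = (SOME y. y < dY j \<and> UA j ((restr h (DQ0 j))(LY 0 j := y)) = UQ j (restr h (DQ0 j)))"

lemma ch_props: assumes "1 \<le> j" "j \<le> r" "h \<in> basis dd (DQ0 j)"
  shows "ch j h < dY j" "UA j (h(LY 0 j := ch j h)) = UQ j h"
proof -
  have rh: "restr h (DQ0 j) = h" using restr_basis_self[OF assms(3)] .
  have "\<exists>y. y < dY j \<and> UA j ((restr h (DQ0 j))(LY 0 j := y)) = UQ j (restr h (DQ0 j))"
    unfolding rh using UQ_props(4)[OF assms] by blast
  from someI_ex[OF this] show "ch j h < dY j" "UA j (h(LY 0 j := ch j h)) = UQ j h"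
    unfolding ch_def rh by auto
qed

lemma ch_restr: "restr h (DQ0 j) = restr h' (DQ0 j) \<Longrightarrow> ch j h = ch j h'"
  unfolding ch_def by simp

end


lemma merge_basis: "a \<in> basis d A \<Longrightarrow> b \<in> basis d B \<Longrightarrow> merge a b B \<in> basis d (A \<union> B)"
  unfolding basis_iff by (auto simp: merge_def)

lemma disj_lab: "(\<And>c i. LX c i \<in> A \<Longrightarrow> LX c i \<notin> B) \<Longrightarrow> (\<And>c i. LY c i \<in> A \<Longrightarrow> LY c i \<notin> B) \<Longrightarrow> A \<inter> B = {}"
  by (rule set_eq_lab) auto

context game begin

abbreviation "DA n j \<equiv> NY n j \<union> NX n j"
abbreviation "DQ n j \<equiv> NY n (j - 1) \<union> NX n j"

definition wit :: "nat \<Rightarrow> (nat \<Rightarrow> op) \<Rightarrow> bool" where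
  "wit n Xs \<longleftrightarrow> (\<forall>j\<in>{1..r}. psd dd (DA n j) (Xs j)) \<and>
      op_eq dd (NX n 1) (ptrace dd (LYs n 1) (Xs 1)) idop \<and>
      (\<forall>j\<in>{2..r}. op_eq dd (NY n (j - 1) \<union> NX n j)
          (ptrace dd (LYs n j) (Xs j))
          (tens (NY n (j - 1) \<union> NX n (j - 1)) (Xs (j - 1)) (LXs n j) idop))"

lemma strat_wit: "is_strategy dX dY r n X \<longleftrightarrow> (\<exists>Xs. wit n Xs \<and> op_eq dd (DA n r) (Xs r) X)"
  unfolding is_strategy_def wit_def Let_def by blast

definition xprev :: "nat \<Rightarrow> (nat \<Rightarrow> op) \<Rightarrow> nat \<Rightarrow> idx \<Rightarrow> real" where
  "xprev n Xs j a = (if j = 1 then 1 else Re (Xs (j - 1) (restr a (DA n (j - 1))) (restr a (DA n (j - 1)))))"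

lemma F1: "wit n Xs \<Longrightarrow> 1 \<le> j \<Longrightarrow> j \<le> r \<Longrightarrow> a \<in> basis dd (DA n j) \<Longrightarrow> Im (Xs j a a) = 0 \<and> 0 \<le> Re (Xs j a a)"
  unfolding wit_def by (intro psd_diag[of dd "DA n j"]) auto

lemma F2: assumes "wit n Xs" "1 \<le> j" "j \<le> r" "a \<in> basis dd (DQ n j)"
  shows "(\<Sum>y\<in>basis dd (LYs n j). Re (Xs j (merge a y (LYs n j)) (merge a y (LYs n j)))) = xprev n Xs j a"
proof -
  have "(\<Sum>y\<in>basis dd (LYs n j). Re (Xs j (merge a y (LYs n j)) (merge a y (LYs n j))))
     = Re (ptrace dd (LYs n j) (Xs j) a a)" unfolding ptrace_def by simp
  also have "\<dots> = xprev n Xs j a"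
  proof (cases "j = 1")
    case True
    hence "a \<in> basis dd (NX n 1)" using assms(4) by simp
    hence "ptrace dd (LYs n j) (Xs j) a a = idop a a" using assms(1) True unfolding wit_def op_eq_def by blast
    thus ?thesis using True by (simp add: idop_def xprev_def)
  next
    case False
    hence "ptrace dd (LYs n j) (Xs j) a a = tens (DA n (j - 1)) (Xs (j - 1)) (LXs n j) idop a a"
      using assms unfolding wit_def op_eq_def by auto
    thus ?thesis using False by (simp add: tens_def idop_def xprev_def)
  qed
  finally show ?thesis .
qed

definition SA :: "nat \<Rightarrow> nat \<Rightarrow> (nat \<Rightarrow> op) \<Rightarrow> nat \<Rightarrow> real" where
  "SA n k Xs j = (\<Sum>a\<in>basis dd (DA n j). Re (Xs j a a) * Gf n k (\<lambda>c. UA j (loc r c a)) (\<lambda>c. MQ j (loc r c a)))"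

definition SQ :: "nat \<Rightarrow> nat \<Rightarrow> (nat \<Rightarrow> op) \<Rightarrow> nat \<Rightarrow> real" where
  "SQ n k Xs j = (\<Sum>a\<in>basis dd (DQ n j). xprev n Xs j a * Gf n k (\<lambda>c. UQ j (loc r c a)) (\<lambda>c. MQ j (loc r c a)))"

lemma DA_split: "1 \<le> j \<Longrightarrow> DA n j = DQ n j \<union> LYs n j"
  by (rule set_eq_lab) auto
lemma DA_disj: "DQ n j \<inter> LYs n j = {}"
  by (rule disj_lab) auto

lemma C1_term: assumes "wit n Xs" "1 \<le> j" "j \<le> r" "a \<in> basis dd (DQ n j)" "y \<in> basis dd (LYs n j)"
  shows "Re (Xs j (merge a y (LYs n j)) (merge a y (LYs n j))) * Gf n k (\<lambda>c. UA j (loc r c (merge a y (LYs n j)))) (\<lambda>c. MQ j (loc r c (merge a y (LYs n j))))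
     \<le> Re (Xs j (merge a y (LYs n j)) (merge a y (LYs n j))) * Gf n k (\<lambda>c. UQ j (loc r c a)) (\<lambda>c. MQ j (loc r c a))"
proof -
  have mb: "merge a y (LYs n j) \<in> basis dd (DA n j)" unfolding DA_split[OF assms(2)] using assms(4,5) by (rule merge_basis)
  have x0: "0 \<le> Re (Xs j (merge a y (LYs n j)) (merge a y (LYs n j)))" using F1[OF assms(1-3) mb] by simp
  have e: "Gf n k (\<lambda>c. UA j (loc r c (merge a y (LYs n j)))) (\<lambda>c. MQ j (loc r c (merge a y (LYs n j))))
     = Gf n k (\<lambda>c. UA j ((loc r c a)(LY 0 j := y (LY c j)))) (\<lambda>c. MQ j (loc r c a))"
    using assms(2,3) by (intro Gf_cong) (simp_all add: loc_merge_LY MQ_updY)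
  have "Gf n k (\<lambda>c. UA j ((loc r c a)(LY 0 j := y (LY c j)))) (\<lambda>c. MQ j (loc r c a)) \<le> Gf n k (\<lambda>c. UQ j (loc r c a)) (\<lambda>c. MQ j (loc r c a))"
  proof (rule Gf_mono, intro allI impI)
    fix c assume c: "c < n"
    have lb: "loc r c a \<in> basis dd (DQ0 j)" using assms(3,4) c by (intro loc_basis) auto
    have yv: "y (LY c j) < dY j" using assms(5) c unfolding basis_iff by (metis ldim.simps(2) mem_LYs(1))
    have "(loc r c a)(LY 0 j := y (LY c j)) \<in> basis dd (DA0 j)" unfolding DA0_eq[OF assms(2)]
      using lb yv by (intro basis_upd) auto
    hence "0 \<le> UA j ((loc r c a)(LY 0 j := y (LY c j)))" using UA_bounds assms(2,3) by blast
    thus "0 \<le> UA j ((loc r c a)(LY 0 j := y (LY c j))) \<and> UA j ((loc r c a)(LY 0 j := y (LY c j))) \<le> UQ j (loc r c a) \<and> UQ j (loc r c a) \<le> MQ j (loc r c a)"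
      using UQ_props[OF assms(2,3) lb] yv by auto
  qed
  thus ?thesis unfolding e using x0 by (rule mult_left_mono)
qed

lemma SA_split: assumes "1 \<le> j"
  shows "SA n k Xs j = (\<Sum>a\<in>basis dd (DQ n j). \<Sum>y\<in>basis dd (LYs n j).
     Re (Xs j (merge a y (LYs n j)) (merge a y (LYs n j))) * Gf n k (\<lambda>c. UA j (loc r c (merge a y (LYs n j)))) (\<lambda>c. MQ j (loc r c (merge a y (LYs n j)))))"
  unfolding SA_def DA_split[OF assms] by (rule sum_basis_union[OF DA_disj])

lemma C1: assumes "wit n Xs" "1 \<le> j" "j \<le> r"
  shows "SA n k Xs j \<le> SQ n k Xs j"
proof -
  have "SA n k Xs j \<le> (\<Sum>a\<in>basis dd (DQ n j). \<Sum>y\<in>basis dd (LYs n j).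
     Re (Xs j (merge a y (LYs n j)) (merge a y (LYs n j))) * Gf n k (\<lambda>c. UQ j (loc r c a)) (\<lambda>c. MQ j (loc r c a)))"
    unfolding SA_split[OF assms(2)] using C1_term[OF assms] by (intro sum_mono) auto
  also have "\<dots> = SQ n k Xs j" unfolding SQ_def
    by (intro sum.cong refl) (simp add: sum_distrib_right[symmetric] F2[OF assms])
  finally show ?thesis .
qed

lemma C1eq: assumes "wit n Xs" "1 \<le> j" "j \<le> r"
  and det: "\<And>a y c. a \<in> basis dd (DQ n j) \<Longrightarrow> y \<in> basis dd (LYs n j) \<Longrightarrow> c < n \<Longrightarrow>
        Re (Xs j (merge a y (LYs n j)) (merge a y (LYs n j))) \<noteq> 0 \<Longrightarrow> y (LY c j) = ch j (loc r c a)"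
  shows "SA n k Xs j = SQ n k Xs j"
proof -
  have "SA n k Xs j = (\<Sum>a\<in>basis dd (DQ n j). \<Sum>y\<in>basis dd (LYs n j).
     Re (Xs j (merge a y (LYs n j)) (merge a y (LYs n j))) * Gf n k (\<lambda>c. UQ j (loc r c a)) (\<lambda>c. MQ j (loc r c a)))"
    unfolding SA_split[OF assms(2)]
  proof (intro sum.cong refl)
    fix a y assume a: "a \<in> basis dd (DQ n j)" and y: "y \<in> basis dd (LYs n j)"
    show "Re (Xs j (merge a y (LYs n j)) (merge a y (LYs n j))) * Gf n k (\<lambda>c. UA j (loc r c (merge a y (LYs n j)))) (\<lambda>c. MQ j (loc r c (merge a y (LYs n j))))
       = Re (Xs j (merge a y (LYs n j)) (merge a y (LYs n j))) * Gf n k (\<lambda>c. UQ j (loc r c a)) (\<lambda>c. MQ j (loc r c a))"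
    proof (cases "Re (Xs j (merge a y (LYs n j)) (merge a y (LYs n j))) = 0")
      case True then show ?thesis by simp
    next
      case False
      have "Gf n k (\<lambda>c. UA j (loc r c (merge a y (LYs n j)))) (\<lambda>c. MQ j (loc r c (merge a y (LYs n j))))
         = Gf n k (\<lambda>c. UQ j (loc r c a)) (\<lambda>c. MQ j (loc r c a))"
      proof (intro Gf_cong allI impI)
        fix c assume c: "c < n"
        have lb: "loc r c a \<in> basis dd (DQ0 j)" using assms(3) a c by (intro loc_basis) auto
        show "UA j (loc r c (merge a y (LYs n j))) = UQ j (loc r c a)"
          using det[OF a y c False] ch_props[OF assms(2,3) lb] assms(2,3) c by (simp add: loc_merge_LY)
        show "MQ j (loc r c (merge a y (LYs n j))) = MQ j (loc r c a)"
          using assms(2,3) c by (simp add: loc_merge_LY MQ_updY)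
      qed
      thus ?thesis by simp
    qed
  qed
  also have "\<dots> = SQ n k Xs j" unfolding SQ_def
    by (intro sum.cong refl) (simp add: sum_distrib_right[symmetric] F2[OF assms(1-3)])
  finally show ?thesis .
qed

lemma DQ_split: "DQ n (Suc j) = DA n j \<union> LXs n (Suc j)"
  by (rule set_eq_lab) auto
lemma DQ_disj: "DA n j \<inter> LXs n (Suc j) = {}"
  by (rule disj_lab) auto

lemma C2: assumes "1 \<le> j" "j < r"
  shows "SQ n k Xs (Suc j) = SA n k Xs j"
proof -
  have "SQ n k Xs (Suc j) = (\<Sum>a\<in>basis dd (DA n j). \<Sum>z\<in>basis dd (LXs n (Suc j)).
      xprev n Xs (Suc j) (merge a z (LXs n (Suc j))) * Gf n k (\<lambda>c. UQ (Suc j) (loc r c (merge a z (LXs n (Suc j))))) (\<lambda>c. MQ (Suc j) (loc r c (merge a z (LXs n (Suc j))))))"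
    unfolding SQ_def DQ_split by (rule sum_basis_union[OF DQ_disj])
  also have "\<dots> = (\<Sum>a\<in>basis dd (DA n j). Re (Xs j a a) * (\<Sum>z\<in>basis dd (LXs n (Suc j)).
      Gf n k (\<lambda>c. UQ (Suc j) ((loc r c a)(LX 0 (Suc j) := z (LX c (Suc j))))) (\<lambda>c. MQ (Suc j) ((loc r c a)(LX 0 (Suc j) := z (LX c (Suc j)))))))"
  proof (intro sum.cong refl)
    fix a assume a: "a \<in> basis dd (DA n j)"
    have xp: "xprev n Xs (Suc j) (merge a z (LXs n (Suc j))) = Re (Xs j a a)" for z
      using assms merge_restr[OF a DQ_disj] by (simp add: xprev_def)
    show "(\<Sum>z\<in>basis dd (LXs n (Suc j)).
      xprev n Xs (Suc j) (merge a z (LXs n (Suc j))) * Gf n k (\<lambda>c. UQ (Suc j) (loc r c (merge a z (LXs n (Suc j))))) (\<lambda>c. MQ (Suc j) (loc r c (merge a z (LXs n (Suc j))))))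
      = Re (Xs j a a) * (\<Sum>z\<in>basis dd (LXs n (Suc j)).
      Gf n k (\<lambda>c. UQ (Suc j) ((loc r c a)(LX 0 (Suc j) := z (LX c (Suc j))))) (\<lambda>c. MQ (Suc j) ((loc r c a)(LX 0 (Suc j) := z (LX c (Suc j))))))"
      unfolding xp sum_distrib_left
      using assms by (intro sum.cong refl arg_cong[where f="\<lambda>t. Re (Xs j a a) * t"] Gf_cong) (simp_all add: loc_merge_LX)
  qed
  also have "\<dots> = SA n k Xs j" unfolding SA_def
  proof (intro sum.cong refl)
    fix a assume a: "a \<in> basis dd (DA n j)"
    show "Re (Xs j a a) * (\<Sum>z\<in>basis dd (LXs n (Suc j)).
      Gf n k (\<lambda>c. UQ (Suc j) ((loc r c a)(LX 0 (Suc j) := z (LX c (Suc j))))) (\<lambda>c. MQ (Suc j) ((loc r c a)(LX 0 (Suc j) := z (LX c (Suc j))))))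
     = Re (Xs j a a) * Gf n k (\<lambda>c. UA j (loc r c a)) (\<lambda>c. MQ j (loc r c a))"
      unfolding layer_sum[where f="\<lambda>c v. UQ (Suc j) ((loc r c a)(LX 0 (Suc j) := v))" and g="\<lambda>c v. MQ (Suc j) ((loc r c a)(LX 0 (Suc j) := v))"]
    proof (intro arg_cong[where f="\<lambda>t. Re (Xs j a a) * t"] Gf_cong allI impI)
      fix c assume c: "c < n"
      show "(\<Sum>v<dX (Suc j). UQ (Suc j) ((loc r c a)(LX 0 (Suc j) := v))) = UA j (loc r c a)"
        using UA_step assms by simp
    next
      fix c assume c: "c < n"
      have lb: "loc r c a \<in> basis dd (DA0 j)" using assms a c by (intro loc_basis) auto
      show "(\<Sum>v<dX (Suc j). MQ (Suc j) ((loc r c a)(LX 0 (Suc j) := v))) = MQ j (loc r c a)"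
        using MQ_step[OF assms lb] .
    qed
  qed
  finally show ?thesis .
qed

definition pstar :: real where
  "pstar = (\<Sum>v<dX 1. UQ 1 ((\<lambda>_. 0)(LX 0 1 := v)))"

lemma C3: "SQ n k Xs 1 = Gf n k (\<lambda>_. pstar) (\<lambda>_. 1)"
proof -
  have "SQ n k Xs 1 = (\<Sum>a\<in>basis dd (LXs n 1). Gf n k (\<lambda>c. UQ 1 ((\<lambda>_. 0)(LX 0 1 := a (LX c 1)))) (\<lambda>c. MQ 1 ((\<lambda>_. 0)(LX 0 1 := a (LX c 1)))))"
    unfolding SQ_def NX_1 diff_self_eq_0 NY_0 Un_empty_left
  proof (intro sum.cong refl)
    fix a assume a: "a \<in> basis dd (LXs n 1)"
    have ma: "merge (\<lambda>_. 0) a (LXs n 1) = a" using a unfolding basis_iff by (auto simp: merge_def fun_eq_iff)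
    have "loc r c a = (\<lambda>_. 0)(LX 0 1 := a (LX c 1))" if "c < n" for c
      using loc_merge_LX[of 1 r c n "\<lambda>_. 0" a] r1 that unfolding ma by simp
    thus "xprev n Xs 1 a * Gf n k (\<lambda>c. UQ 1 (loc r c a)) (\<lambda>c. MQ 1 (loc r c a))
      = Gf n k (\<lambda>c. UQ 1 ((\<lambda>_. 0)(LX 0 1 := a (LX c 1)))) (\<lambda>c. MQ 1 ((\<lambda>_. 0)(LX 0 1 := a (LX c 1))))"
      by (simp add: xprev_def, intro Gf_cong allI impI; simp)
  qed
  also have "\<dots> = Gf n k (\<lambda>c. pstar) (\<lambda>c. \<Sum>v<dX 1. MQ 1 ((\<lambda>_. 0)(LX 0 1 := v)))"
    unfolding pstar_def by (rule layer_sum[where f="\<lambda>c v. UQ 1 ((\<lambda>_. 0)(LX 0 1 := v))" and g="\<lambda>c v. MQ 1 ((\<lambda>_. 0)(LX 0 1 := v))"])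
  also have "(\<Sum>v<dX 1. MQ 1 ((\<lambda>_. 0)(LX 0 1 := v))) = 1"
  proof -
    have "\<And>v. restr ((\<lambda>_. 0)(LX 0 1 := v)) (DQ0 1) = (\<lambda>_. 0)(LX 0 1 := v)"
      by (rule fun_eq_lab) (auto simp: restr_def)
    hence "(\<Sum>v<dX 1. MQ 1 ((\<lambda>_. 0)(LX 0 1 := v))) = Re (\<Sum>x<dX 1. R 1 ((\<lambda>_. 0)(LX 0 1 := x)) ((\<lambda>_. 0)(LX 0 1 := x)))"
      unfolding MQ_def by simp
    thus ?thesis unfolding R_1 by simp
  qed
  finally show ?thesis .
qed

lemma chain: assumes "wit n Xs" shows "SA n k Xs r \<le> Gf n k (\<lambda>_. pstar) (\<lambda>_. 1)"
proof -
  have "\<forall>j. 1 \<le> j \<longrightarrow> j \<le> r \<longrightarrow> SA n k Xs j \<le> Gf n k (\<lambda>_. pstar) (\<lambda>_. 1)"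
  proof (intro allI)
    fix j show "1 \<le> j \<longrightarrow> j \<le> r \<longrightarrow> SA n k Xs j \<le> Gf n k (\<lambda>_. pstar) (\<lambda>_. 1)"
    proof (induction j)
      case 0 then show ?case by simp
    next
      case (Suc j)
      show ?case
      proof (intro impI)
        assume h: "1 \<le> Suc j" "Suc j \<le> r"
        show "SA n k Xs (Suc j) \<le> Gf n k (\<lambda>_. pstar) (\<lambda>_. 1)"
        proof (cases "j = 0")
          case True
          then show ?thesis using C1[OF assms h] C3 by simp
        next
          case False
          hence i: "SA n k Xs j \<le> Gf n k (\<lambda>_. pstar) (\<lambda>_. 1)" using Suc h by simp
          have "SQ n k Xs (Suc j) = SA n k Xs j" using C2 False h by simp
          thus ?thesis using C1[OF assms h, of k] i by linarith
        qed
      qed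
    qed
  qed
  thus ?thesis using r1 by simp
qed

lemma chain_eq: assumes "wit n Xs"
  and det: "\<And>j a y c. 1 \<le> j \<Longrightarrow> j \<le> r \<Longrightarrow> a \<in> basis dd (DQ n j) \<Longrightarrow> y \<in> basis dd (LYs n j) \<Longrightarrow> c < n \<Longrightarrow>
        Re (Xs j (merge a y (LYs n j)) (merge a y (LYs n j))) \<noteq> 0 \<Longrightarrow> y (LY c j) = ch j (loc r c a)"
  shows "SA n k Xs r = Gf n k (\<lambda>_. pstar) (\<lambda>_. 1)"
proof -
  have "\<forall>j. 1 \<le> j \<longrightarrow> j \<le> r \<longrightarrow> SA n k Xs j = Gf n k (\<lambda>_. pstar) (\<lambda>_. 1)"
  proof (intro allI)
    fix j show "1 \<le> j \<longrightarrow> j \<le> r \<longrightarrow> SA n k Xs j = Gf n k (\<lambda>_. pstar) (\<lambda>_. 1)"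
    proof (induction j)
      case 0 then show ?case by simp
    next
      case (Suc j)
      show ?case
      proof (intro impI)
        assume h: "1 \<le> Suc j" "Suc j \<le> r"
        have e: "SA n k Xs (Suc j) = SQ n k Xs (Suc j)"
          by (rule C1eq[OF assms(1) h]) (rule det[OF h]; assumption)
        show "SA n k Xs (Suc j) = Gf n k (\<lambda>_. pstar) (\<lambda>_. 1)"
        proof (cases "j = 0")
          case True
          then show ?thesis using e C3 by simp
        next
          case False
          hence "SA n k Xs j = Gf n k (\<lambda>_. pstar) (\<lambda>_. 1)" using Suc h by simp
          moreover have "SQ n k Xs (Suc j) = SA n k Xs j" using C2 False h by simp
          ultimately show ?thesis using e by simp
        qed
      qed
    qed
  qed
  thus ?thesis using r1 by simp
qed

end


lemma inner_diag: assumes "finite S" "\<forall>a\<in>basis d S. \<forall>b\<in>basis d S. a \<noteq> b \<longrightarrow> A a b = 0"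
  shows "inner_op d S A X = (\<Sum>a\<in>basis d S. cnj (A a a) * X a a)"
  unfolding inner_op_def
proof (intro sum.cong refl)
  fix a assume a: "a \<in> basis d S"
  have "(\<Sum>b\<in>basis d S. cnj (A a b) * X a b) = (\<Sum>b\<in>basis d S. if b = a then cnj (A a a) * X a a else 0)"
    using assms(2) a by (intro sum.cong) auto
  also have "\<dots> = cnj (A a a) * X a a" using finite_basis[OF assms(1)] a by simp
  finally show "(\<Sum>b\<in>basis d S. cnj (A a b) * X a b) = cnj (A a a) * X a a" .
qed

lemma copyop_loc: "copyop r c P a b = P (loc r c a) (loc r c b)"
  by (simp add: copyop_def loc_def)

context game begin

lemma loc_diff: assumes "a \<in> basis dd (DA n r)" "b \<in> basis dd (DA n r)" "a \<noteq> b"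
  shows "\<exists>c<n. loc r c a \<noteq> loc r c b"
proof -
  obtain l where l: "a l \<noteq> b l" using assms(3) by auto
  have lin: "l \<in> DA n r"
  proof (rule ccontr)
    assume "l \<notin> DA n r"
    hence "a l = 0" "b l = 0" using assms(1,2) unfolding basis_iff by blast+
    with l show False by simp
  qed
  show ?thesis
  proof (cases l)
    case (LX c i)
    hence "c < n" "1 \<le> i" "i \<le> r" using lin by auto
    hence "loc r c a (LX 0 i) \<noteq> loc r c b (LX 0 i)" using l LX by simp
    thus ?thesis using \<open>c < n\<close> by metis
  next
    case (LY c i)
    hence "c < n" "1 \<le> i" "i \<le> r" using lin by auto
    hence "loc r c a (LY 0 i) \<noteq> loc r c b (LY 0 i)" using l LY by simp
    thus ?thesis using \<open>c < n\<close> by metis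
  qed
qed

lemma prodop_offdiag: assumes "length bs = n" "a \<in> basis dd (DA n r)" "b \<in> basis dd (DA n r)" "a \<noteq> b"
  shows "prodop r P0 P1 bs a b = 0"
proof -
  obtain c where c: "c < n" "loc r c a \<noteq> loc r c b" using loc_diff[OF assms(2-4)] by blast
  have la: "loc r c a \<in> basis dd V0" "loc r c b \<in> basis dd V0" using assms c by (intro loc_basis; simp)+
  have "copyop r c (if bs ! c then P1 else P0) a b = 0"
    unfolding copyop_loc using dP0 dP1 la c(2) unfolding diagonal_def by auto
  hence "\<exists>x\<in>{..<length bs}. copyop r x (if bs ! x then P1 else P0) a b = 0" using c assms(1) by blast
  thus ?thesis unfolding prodop_def by (rule prod_zero[OF finite_lessThan])
qed

lemma prodop_diag: assumes "length bs = n" "a \<in> basis dd (DA n r)"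
  shows "prodop r P0 P1 bs a a = complex_of_real (\<Prod>c<n. (if bs ! c then Re (P1 (loc r c a) (loc r c a)) else Re (P0 (loc r c a) (loc r c a))))"
  unfolding prodop_def of_real_prod assms(1)
proof (intro prod.cong refl)
  fix c assume "c \<in> {..<n}"
  hence la: "loc r c a \<in> basis dd V0" using assms by (intro loc_basis) auto
  show "copyop r c (if bs ! c then P1 else P0) a a = complex_of_real (if bs ! c then Re (P1 (loc r c a) (loc r c a)) else Re (P0 (loc r c a) (loc r c a)))"
    unfolding copyop_loc using P_psd[OF la] by (auto simp: complex_eq_iff)
qed

lemma value_n: assumes "wit n Xs" "op_eq dd (DA n r) (Xs r) X"
  shows "Re (\<Sum>bs\<in>{bs. length bs = n \<and> k \<le> length (filter id bs)}. inner_op dd (DA n r) (prodop r P0 P1 bs) X) = SA n k Xs r"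
proof -
  let ?B = "{bs. length bs = n \<and> k \<le> length (filter id bs)}"
  let ?p = "\<lambda>bs a. \<Prod>c<n. (if bs ! c then Re (P1 (loc r c a) (loc r c a)) else Re (P0 (loc r c a) (loc r c a)))"
  have "Re (\<Sum>bs\<in>?B. inner_op dd (DA n r) (prodop r P0 P1 bs) X) = (\<Sum>bs\<in>?B. \<Sum>a\<in>basis dd (DA n r). ?p bs a * Re (Xs r a a))"
    unfolding Re_sum
  proof (intro sum.cong refl)
    fix bs assume bs: "bs \<in> ?B"
    have "inner_op dd (DA n r) (prodop r P0 P1 bs) X = (\<Sum>a\<in>basis dd (DA n r). cnj (prodop r P0 P1 bs a a) * X a a)"
      using bs prodop_offdiag by (intro inner_diag) auto
    also have "\<dots> = (\<Sum>a\<in>basis dd (DA n r). complex_of_real (?p bs a) * Xs r a a)"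
      using bs assms(2) unfolding op_eq_def by (intro sum.cong refl) (simp add: prodop_diag del: of_real_prod)
    finally show "Re (inner_op dd (DA n r) (prodop r P0 P1 bs) X) = (\<Sum>a\<in>basis dd (DA n r). ?p bs a * Re (Xs r a a))"
      by (simp add: Re_sum del: of_real_prod)
  qed
  also have "\<dots> = (\<Sum>a\<in>basis dd (DA n r). Re (Xs r a a) * (\<Sum>bs\<in>?B. ?p bs a))"
    by (subst sum.swap) (simp add: sum_distrib_left mult.commute)
  also have "\<dots> = SA n k Xs r" unfolding SA_def
  proof (intro sum.cong refl)
    fix a assume a: "a \<in> basis dd (DA n r)"
    have "(\<Sum>bs\<in>?B. ?p bs a) = Gf n k (\<lambda>c. Re (P1 (loc r c a) (loc r c a))) (\<lambda>c. Re (P1 (loc r c a) (loc r c a)) + Re (P0 (loc r c a) (loc r c a)))"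
      by (rule bs_sum)
    also have "\<dots> = Gf n k (\<lambda>c. UA r (loc r c a)) (\<lambda>c. MQ r (loc r c a))"
    proof (intro Gf_cong allI impI)
      fix c assume c: "c < n"
      have la: "loc r c a \<in> basis dd V0" using a c by (intro loc_basis) auto
      show "Re (P1 (loc r c a) (loc r c a)) = UA r (loc r c a)" by (simp add: UA_r)
      show "Re (P1 (loc r c a) (loc r c a)) + Re (P0 (loc r c a) (loc r c a)) = MQ r (loc r c a)"
        unfolding MQ_def P_sum[OF la, symmetric] by simp
    qed
    finally show "Re (Xs r a a) * (\<Sum>bs\<in>?B. ?p bs a) = Re (Xs r a a) * Gf n k (\<lambda>c. UA r (loc r c a)) (\<lambda>c. MQ r (loc r c a))"
      by simp
  qed
  finally show ?thesis .
qed

lemma value_1: assumes "wit 1 Xs" "op_eq dd (DA 1 r) (Xs r) X"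
  shows "Re (inner_op dd V0 P1 X) = SA 1 1 Xs r"
proof -
  have "inner_op dd V0 P1 X = (\<Sum>a\<in>basis dd V0. cnj (P1 a a) * X a a)"
    using dP1 unfolding diagonal_def by (intro inner_diag) auto
  hence "Re (inner_op dd V0 P1 X) = (\<Sum>a\<in>basis dd V0. Re (cnj (P1 a a) * X a a))"
    by (simp add: Re_sum)
  also have "\<dots> = SA 1 1 Xs r" unfolding SA_def N1_V
  proof (intro sum.cong refl)
    fix a assume a: "a \<in> basis dd V0"
    have x: "X a a = Xs r a a" using assms(2) a unfolding op_eq_def N1_V by simp
    have p: "P1 a a = complex_of_real (Re (P1 a a))" using P_psd(2)[OF a] by (simp add: complex_eq_iff)
    have "Re (cnj (P1 a a) * X a a) = Re (P1 a a) * Re (Xs r a a)"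
      unfolding x by (subst p) simp
    thus "Re (cnj (P1 a a) * X a a) = Re (Xs r a a) * Gf 1 1 (\<lambda>c. UA r (loc r c a)) (\<lambda>c. MQ r (loc r c a))"
      using loc_0_self[OF a] by (simp add: UA_r)
  qed
  finally show ?thesis .
qed

definition good :: "nat \<Rightarrow> nat \<Rightarrow> idx \<Rightarrow> bool" where
  "good n j a \<longleftrightarrow> (\<forall>c<n. \<forall>i\<in>{1..j}. a (LY c i) = ch i (loc r c a))"

definition Xd :: "nat \<Rightarrow> nat \<Rightarrow> op" where
  "Xd n j a b = (if a = b \<and> good n j a then 1 else 0)"

lemma G1: assumes "1 \<le> j" "j \<le> r" "a \<in> basis dd (DQ n j)"
  shows "good n j (merge a y (LYs n j)) \<longleftrightarrow> good n (j - 1) a \<and> (\<forall>c<n. y (LY c j) = ch j (loc r c a))"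
proof -
  have chs: "ch i (loc r c (merge a y (LYs n j))) = ch i (loc r c a)" if "c < n" "i \<le> j" for c i
  proof (rule ch_restr)
    show "restr (loc r c (merge a y (LYs n j))) (DQ0 i) = restr (loc r c a) (DQ0 i)"
      unfolding loc_merge_LY[OF assms(1,2) that(1)] using that by (intro fun_eq_lab) (auto simp: restr_def)
  qed
  have "good n j (merge a y (LYs n j)) \<longleftrightarrow> (\<forall>c<n. \<forall>i\<in>{1..j}. merge a y (LYs n j) (LY c i) = ch i (loc r c a))"
    unfolding good_def using chs by auto
  also have "\<dots> \<longleftrightarrow> good n (j - 1) a \<and> (\<forall>c<n. y (LY c j) = ch j (loc r c a))"
  proof -
    have e: "{1..j} = insert j {1..j-1}" using assms(1) by auto
    show ?thesis unfolding good_def merge_def e by auto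
  qed
  finally show ?thesis .
qed

end


context game begin

lemma G2: assumes "a \<in> basis dd (DQ n j)"
  shows "good n (j - 1) (restr a (DA n (j - 1))) \<longleftrightarrow> good n (j - 1) a"
proof -
  have chs: "ch i (loc r c (restr a (DA n (j - 1)))) = ch i (loc r c a)" if "c < n" "i \<le> j - 1" for c i
  proof (rule ch_restr)
    show "restr (loc r c (restr a (DA n (j - 1)))) (DQ0 i) = restr (loc r c a) (DQ0 i)"
      using that by (intro fun_eq_lab) (auto simp: restr_def)
  qed
  show ?thesis unfolding good_def using chs by (auto simp: restr_def)
qed

lemma G3: assumes "\<forall>c<n. g c < dY j"
  shows "(\<Sum>y\<in>basis dd (LYs n j). if (\<forall>c<n. y (LY c j) = g c) then 1 else 0 :: complex) = 1"
proof -
  define y0 :: idx where "y0 = (\<lambda>l. case l of LY c i \<Rightarrow> if c < n \<and> i = j then g c else 0 | LX c i \<Rightarrow> 0)"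
  have y0b: "y0 \<in> basis dd (LYs n j)" unfolding basis_iff
  proof (intro conjI allI ballI impI)
    fix l assume "l \<in> LYs n j" thus "y0 l < dd l" using assms by (cases l) (auto simp: y0_def)
  next
    fix l assume "l \<notin> LYs n j" thus "y0 l = 0" by (cases l) (auto simp: y0_def)
  qed
  have iff: "(\<forall>c<n. y (LY c j) = g c) \<longleftrightarrow> y = y0" if y: "y \<in> basis dd (LYs n j)" for y
  proof
    assume h: "\<forall>c<n. y (LY c j) = g c"
    show "y = y0"
    proof (rule fun_eq_lab)
      fix c i show "y (LX c i) = y0 (LX c i)" using y unfolding basis_iff by (simp add: y0_def)
      show "y (LY c i) = y0 (LY c i)" using y h unfolding basis_iff by (auto simp: y0_def)
    qed
  next
    assume "y = y0" thus "\<forall>c<n. y (LY c j) = g c" by (simp add: y0_def)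
  qed
  have "(\<Sum>y\<in>basis dd (LYs n j). if (\<forall>c<n. y (LY c j) = g c) then 1 else 0 :: complex)
      = (\<Sum>y\<in>basis dd (LYs n j). if y = y0 then 1 else 0)"
    using iff by (intro sum.cong refl) auto
  also have "\<dots> = 1" using y0b finite_basis[of "LYs n j" dd] by simp
  finally show ?thesis .
qed

lemma PT: assumes "1 \<le> j" "j \<le> r" "a \<in> basis dd (DQ n j)" "b \<in> basis dd (DQ n j)"
  shows "ptrace dd (LYs n j) (Xd n j) a b = (if a = b \<and> good n (j - 1) a then 1 else 0)"
proof (cases "a = b")
  case False
  have "Xd n j (merge a y (LYs n j)) (merge b y (LYs n j)) = 0" for y
  proof -
    have "merge a y (LYs n j) \<noteq> merge b y (LYs n j)"
      using False merge_restr[OF assms(3) DA_disj] merge_restr[OF assms(4) DA_disj] by metis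
    thus ?thesis by (simp add: Xd_def)
  qed
  thus ?thesis unfolding ptrace_def using False by simp
next
  case True
  have lb: "loc r c a \<in> basis dd (DQ0 j)" if "c < n" for c using assms(2,3) that by (intro loc_basis) auto
  have "ptrace dd (LYs n j) (Xd n j) a b = (\<Sum>y\<in>basis dd (LYs n j). if good n (j - 1) a \<and> (\<forall>c<n. y (LY c j) = ch j (loc r c a)) then 1 else 0)"
    unfolding ptrace_def True using G1[OF assms(1-2)] assms(3) True by (intro sum.cong refl) (simp add: Xd_def)
  also have "\<dots> = (if good n (j - 1) a then (\<Sum>y\<in>basis dd (LYs n j). if (\<forall>c<n. y (LY c j) = ch j (loc r c a)) then 1 else 0) else 0)"
    by simp
  also have "\<dots> = (if good n (j - 1) a then 1 else 0)"
    using G3[of n "\<lambda>c. ch j (loc r c a)" j] ch_props(1)[OF assms(1,2) lb] by simp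
  finally show ?thesis using True by simp
qed

lemma wit_Xd: "wit n (Xd n)"
  unfolding wit_def
proof (intro conjI ballI)
  fix j assume "j \<in> {1..r}"
  show "psd dd (DA n j) (Xd n j)" by (rule psd_of_diag) (auto simp: Xd_def)
next
  show "op_eq dd (NX n 1) (ptrace dd (LYs n 1) (Xd n 1)) idop"
    unfolding op_eq_def
  proof (intro ballI)
    fix a b assume "a \<in> basis dd (NX n 1)" "b \<in> basis dd (NX n 1)"
    hence "a \<in> basis dd (DQ n 1)" "b \<in> basis dd (DQ n 1)" by simp_all
    from PT[OF _ r1 this] show "ptrace dd (LYs n 1) (Xd n 1) a b = idop a b" by (simp add: good_def idop_def)
  qed
next
  fix j assume j: "j \<in> {2..r}"
  show "op_eq dd (NY n (j - 1) \<union> NX n j) (ptrace dd (LYs n j) (Xd n j)) (tens (NY n (j - 1) \<union> NX n (j - 1)) (Xd n (j - 1)) (LXs n j) idop)"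
    unfolding op_eq_def
  proof (intro ballI)
    fix a b assume a: "a \<in> basis dd (DQ n j)" and b: "b \<in> basis dd (DQ n j)"
    have pt: "ptrace dd (LYs n j) (Xd n j) a b = (if a = b \<and> good n (j - 1) a then 1 else 0)" using PT j a b by auto
    have sp: "DQ n j = DA n (j - 1) \<union> LXs n j" using DQ_split[of n "j - 1"] j by simp
    show "ptrace dd (LYs n j) (Xd n j) a b = tens (DA n (j - 1)) (Xd n (j - 1)) (LXs n j) idop a b"
    proof (cases "a = b")
      case True
      thus ?thesis unfolding pt tens_def using G2[OF a] by (simp add: Xd_def idop_def)
    next
      case False
      have "restr a (DA n (j - 1)) \<noteq> restr b (DA n (j - 1)) \<or> restr a (LXs n j) \<noteq> restr b (LXs n j)"
      proof (rule ccontr)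
        assume "\<not> ?thesis"
        hence e1: "restr a (DA n (j - 1)) = restr b (DA n (j - 1))" and e2: "restr a (LXs n j) = restr b (LXs n j)" by auto
        have "a = b"
        proof
          fix l
          show "a l = b l"
          proof (cases "l \<in> DQ n j")
            case True
            thus ?thesis using fun_cong[OF e1, of l] fun_cong[OF e2, of l] unfolding sp restr_def by (auto split: if_splits)
          next
            case False
            thus ?thesis using a b unfolding basis_iff by metis
          qed
        qed
        with False show False by simp
      qed
      thus ?thesis unfolding pt tens_def using False by (auto simp: Xd_def idop_def)
    qed
  qed
qed

lemma Xd_strat: "is_strategy dX dY r n (Xd n r)"
  unfolding strat_wit using wit_Xd by (auto simp: op_eq_def)

lemma Xd_value: "SA n k (Xd n) r = Gf n k (\<lambda>_. pstar) (\<lambda>_. 1)"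
proof (rule chain_eq[OF wit_Xd])
  fix j a y c assume j: "1 \<le> j" "j \<le> r" and a: "a \<in> basis dd (DQ n j)" and y: "y \<in> basis dd (LYs n j)" and c: "c < n"
    and nz: "Re (Xd n j (merge a y (LYs n j)) (merge a y (LYs n j))) \<noteq> 0"
  hence "good n j (merge a y (LYs n j))" by (auto simp: Xd_def split: if_splits)
  thus "y (LY c j) = ch j (loc r c a)" using G1[OF j a] c by blast
qed

lemma win_atleast_val: "win_atleast dX dY r P0 P1 n k = Gf n k (\<lambda>_. pstar) (\<lambda>_. 1)"
  unfolding win_atleast_def
proof (rule cSup_eq_maximum)
  show "Gf n k (\<lambda>_. pstar) (\<lambda>_. 1) \<in> {Re (\<Sum>bs\<in>{bs. length bs = n \<and> k \<le> length (filter id bs)}.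
                inner_op dd (NY n r \<union> NX n r) (prodop r P0 P1 bs) X) | X. is_strategy dX dY r n X}"
  proof -
    have "Re (\<Sum>bs\<in>{bs. length bs = n \<and> k \<le> length (filter id bs)}.
                inner_op dd (NY n r \<union> NX n r) (prodop r P0 P1 bs) (Xd n r)) = SA n k (Xd n) r"
      by (rule value_n[OF wit_Xd]) (simp add: op_eq_def)
    hence "Gf n k (\<lambda>_. pstar) (\<lambda>_. 1) = Re (\<Sum>bs\<in>{bs. length bs = n \<and> k \<le> length (filter id bs)}.
                inner_op dd (NY n r \<union> NX n r) (prodop r P0 P1 bs) (Xd n r))" using Xd_value by simp
    thus ?thesis using Xd_strat[of n] by blast
  qed
next
  fix z assume "z \<in> {Re (\<Sum>bs\<in>{bs. length bs = n \<and> k \<le> length (filter id bs)}.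
                inner_op dd (NY n r \<union> NX n r) (prodop r P0 P1 bs) X) | X. is_strategy dX dY r n X}"
  then obtain X Xs where z: "z = Re (\<Sum>bs\<in>{bs. length bs = n \<and> k \<le> length (filter id bs)}.
                inner_op dd (NY n r \<union> NX n r) (prodop r P0 P1 bs) X)" and w: "wit n Xs" "op_eq dd (DA n r) (Xs r) X"
    unfolding strat_wit by blast
  show "z \<le> Gf n k (\<lambda>_. pstar) (\<lambda>_. 1)" unfolding z value_n[OF w] using chain[OF w(1)] .
qed

lemma win_prob_val: "win_prob dX dY r P1 = pstar"
  unfolding win_prob_def
proof (rule cSup_eq_maximum)
  have "SA 1 1 (Xd 1) r = pstar" using Xd_value[of 1 1] by simp
  thus "pstar \<in> {Re (inner_op dd V0 P1 X) | X. is_strategy dX dY r 1 X}"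
  proof -
    have "Re (inner_op dd V0 P1 (Xd 1 r)) = SA 1 1 (Xd 1) r"
      by (rule value_1[OF wit_Xd]) (simp add: op_eq_def)
    hence "pstar = Re (inner_op dd V0 P1 (Xd 1 r))" using \<open>SA 1 1 (Xd 1) r = pstar\<close> by simp
    thus ?thesis using Xd_strat[of 1] by blast
  qed
next
  fix z assume "z \<in> {Re (inner_op dd V0 P1 X) | X. is_strategy dX dY r 1 X}"
  then obtain X Xs where z: "z = Re (inner_op dd V0 P1 X)" and w: "wit 1 Xs" "op_eq dd (DA 1 r) (Xs r) X"
    unfolding strat_wit by blast
  show "z \<le> pstar" unfolding z value_1[OF w] using chain[OF w(1), of 1] by simp
qed

end

theorem mainTheorem3:
  fixes r n k :: nat and dX dY :: "nat \<Rightarrow> nat" and P0 P1 :: op and R :: "nat \<Rightarrow> op"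
  assumes "1 \<le> r"
    and "\<forall>j\<in>{1..r}. 0 < dX j \<and> 0 < dY j"
    and "is_verifier dX dY r P0 P1 R"
    and "diagonal (ldim dX dY) (VY 0 r \<union> VX 0 r) P0"
    and "diagonal (ldim dX dY) (VY 0 r \<union> VX 0 r) P1"
    and "\<forall>j\<in>{1..r}. diagonal (ldim dX dY) (VY 0 (j - 1) \<union> VX 0 j) (R j)"
    and "1 \<le> n" and "k \<le> n"
  shows "win_atleast dX dY r P0 P1 n k =
           (\<Sum>t=k..n. real (n choose t) * (win_prob dX dY r P1) ^ t
                       * (1 - win_prob dX dY r P1) ^ (n - t))"
proof -
  interpret game dX dY r P0 P1 R using assms(1-6) by unfold_locales
  show ?thesis unfolding win_atleast_val win_prob_val by (rule Gf_binom)
qed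


end
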